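(* Let $h:(0,\infty)\to\mathbb{R}$ be of class $C^{n+2}$. Then the Laplace–Beltrami operator $\Delta_{LB}=R^2\nabla^2-\mathbb{E}(M-2+\mathbb{E})$ commutes with multiplication by $h(R^2)$: $[\Delta_{LB},h(R^2)]=0$.
   Context: Fix integers $m\ge1$, $n\ge0$ and put $M=m-2n$. Let $\Lambda_{2n}$ be the complex Grassmann algebra generated by anticommuting variables ${x\grave{}}_1,\dots,{x\grave{}}_{2n}$; superfunctions are functions $f=\sum_A {x\grave{}}_Af_A$ on open subsets of $\mathbb{R}^m$ with $\mathbb{C}$-valued coefficients, ${x\grave{}}_A$ running over the monomials of $\Lambda_{2n}$. Bosonic coordinates $x_1,\dots,x_m$, $r^2=\sum x_i^2$. Fermionic derivatives $\partial_{{x\grave{}}_j}$ commute with the $x_i$ and satisfy $\partial_{{x\grave{}}_j}({x\grave{}}_k g)=\delta_{jk}g-{x\grave{}}_k\partial_{{x\grave{}}_j}g$. Put $\underline{x}\grave{}^2=\sum_{j=1}^n{x\grave{}}_{2j-1}{x\grave{}}_{2j}$, $R^2=r^2-\underline{x}\grave{}^2$. For $h\in C^n((0,\infty))$, $h(R^2)=\sum_{j=0}^n(-1)^j\frac{\underline{x}\grave{}^{2j}}{j!}h^{(j)}(r^2)$. The super Laplace operator is $\nabla^2=\sum_{i=1}^m\partial_{x_i}^2-4\sum_{j=1}^n\partial_{{x\grave{}}_{2j-1}}\partial_{{x\grave{}}_{2j}}$ and the super Euler operator is $\mathbb{E}=\sum_{i=1}^m x_i\partial_{x_i}+\sum_{j=1}^{2n}{x\grave{}}_j\partial_{{x\grave{}}_j}$.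 *)

theory Defs
  imports "HOL-Analysis.Analysis"
begin

text \<open>Superfunctions on an open subset of R^m (m = CARD('m)) with values in the
  complex Grassmann algebra generated by xg_1, ..., xg_2n.  A superfunction is
  represented by its coefficient family: the coefficient of the ordered monomial
  xg_A (A a finite subset of {1..2n}, product in increasing order) is f A.\<close>

type_synonym 'm sfun = "nat set \<Rightarrow> real^'m \<Rightarrow> complex"

definition gens :: "nat \<Rightarrow> nat set" where
  "gens n = {1..2*n}"

definition wf_sfun :: "nat \<Rightarrow> 'm sfun \<Rightarrow> bool" where
  "wf_sfun n f \<longleftrightarrow> (\<forall>A x. \<not> A \<subseteq> gens n \<longrightarrow> f A x = 0)"

definition pd :: "'m::finite \<Rightarrow> (real^'m \<Rightarrow> complex) \<Rightarrow> real^'m \<Rightarrow> complex" where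
  "pd i g x = vector_derivative (\<lambda>t. g (x + t *\<^sub>R axis i 1)) (at 0)"

fun ck_on :: "nat \<Rightarrow> (real^'m::finite) set \<Rightarrow> (real^'m \<Rightarrow> complex) \<Rightarrow> bool" where
  "ck_on 0 S g = continuous_on S g"
| "ck_on (Suc k) S g = ((\<forall>x\<in>S. g differentiable (at x)) \<and> (\<forall>i. ck_on k S (pd i g)))"

fun ck_real :: "nat \<Rightarrow> real set \<Rightarrow> (real \<Rightarrow> real) \<Rightarrow> bool" where
  "ck_real 0 S h = continuous_on S h"
| "ck_real (Suc k) S h = ((\<forall>t\<in>S. h differentiable (at t)) \<and> ck_real k S (deriv h))"

text \<open>sign of the product xg_A xg_B of ordered monomials (A, B disjoint)\<close>
definition gsign :: "nat set \<Rightarrow> nat set \<Rightarrow> complex" where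
  "gsign A B = (-1) ^ card {(a, b). a \<in> A \<and> b \<in> B \<and> b < a}"

definition sf_add :: "'m sfun \<Rightarrow> 'm sfun \<Rightarrow> 'm sfun" where
  "sf_add f g = (\<lambda>A x. f A x + g A x)"

definition sf_scale :: "complex \<Rightarrow> 'm sfun \<Rightarrow> 'm sfun" where
  "sf_scale c f = (\<lambda>A x. c * f A x)"

definition sf_sum :: "nat set \<Rightarrow> (nat \<Rightarrow> 'm sfun) \<Rightarrow> 'm sfun" where
  "sf_sum I F = (\<lambda>A x. \<Sum>i\<in>I. F i A x)"

definition sf_sumb :: "('m::finite \<Rightarrow> 'm sfun) \<Rightarrow> 'm sfun" where
  "sf_sumb F = (\<lambda>A x. \<Sum>i\<in>UNIV. F i A x)"

definition sf_mult :: "'m sfun \<Rightarrow> 'm sfun \<Rightarrow> 'm sfun" where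
  "sf_mult f g = (\<lambda>C x. \<Sum>A | A \<subseteq> C. gsign A (C - A) * f A x * g (C - A) x)"

definition sf_one :: "'m sfun" where
  "sf_one = (\<lambda>A x. if A = {} then 1 else 0)"

definition sf_scal :: "(real^'m \<Rightarrow> complex) \<Rightarrow> 'm sfun" where
  "sf_scal \<phi> = (\<lambda>A x. if A = {} then \<phi> x else 0)"

primrec sf_pow :: "'m sfun \<Rightarrow> nat \<Rightarrow> 'm sfun" where
  "sf_pow f 0 = sf_one"
| "sf_pow f (Suc k) = sf_mult f (sf_pow f k)"

text \<open>left multiplication by the generator xg_j\<close>
definition xg :: "nat \<Rightarrow> 'm sfun \<Rightarrow> 'm sfun" where
  "xg j f = (\<lambda>B x. if j \<in> B then (-1) ^ card {a \<in> B. a < j} * f (B - {j}) x else 0)"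

text \<open>fermionic derivative d/dxg_j\<close>
definition dg :: "nat \<Rightarrow> 'm sfun \<Rightarrow> 'm sfun" where
  "dg j f = (\<lambda>B x. if j \<notin> B then (-1) ^ card {a \<in> B. a < j} * f (insert j B) x else 0)"

definition xb :: "'m::finite \<Rightarrow> 'm sfun \<Rightarrow> 'm sfun" where
  "xb i f = (\<lambda>A x. complex_of_real (x $ i) * f A x)"

definition db :: "'m::finite \<Rightarrow> 'm sfun \<Rightarrow> 'm sfun" where
  "db i f = (\<lambda>A. pd i (f A))"

definition xgsq :: "nat \<Rightarrow> 'm sfun" where
  "xgsq n = sf_sum {1..n} (\<lambda>j. xg (2*j - 1) (xg (2*j) sf_one))"

definition rsq :: "real^'m::finite \<Rightarrow> real" where
  "rsq x = (\<Sum>i\<in>UNIV. (x $ i)^2)"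

definition hR2 :: "nat \<Rightarrow> (real \<Rightarrow> real) \<Rightarrow> 'm::finite sfun" where
  "hR2 n h = sf_sum {0..n} (\<lambda>j. sf_scale ((-1) ^ j / of_nat (fact j))
      (sf_mult (sf_pow (xgsq n) j) (sf_scal (\<lambda>x. complex_of_real (((deriv ^^ j) h) (rsq x))))))"

definition mulR2 :: "nat \<Rightarrow> 'm::finite sfun \<Rightarrow> 'm sfun" where
  "mulR2 n f = sf_add (\<lambda>A x. complex_of_real (rsq x) * f A x) (sf_scale (-1) (sf_mult (xgsq n) f))"

definition super_laplace :: "nat \<Rightarrow> 'm::finite sfun \<Rightarrow> 'm sfun" where
  "super_laplace n f = sf_add (sf_sumb (\<lambda>i. db i (db i f)))
      (sf_scale (-4) (sf_sum {1..n} (\<lambda>j. dg (2*j - 1) (dg (2*j) f))))"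

definition super_euler :: "nat \<Rightarrow> 'm::finite sfun \<Rightarrow> 'm sfun" where
  "super_euler n f = sf_add (sf_sumb (\<lambda>i. xb i (db i f)))
      (sf_sum {1..2*n} (\<lambda>j. xg j (dg j f)))"

definition laplace_beltrami :: "nat \<Rightarrow> 'm::finite sfun \<Rightarrow> 'm sfun" where
  "laplace_beltrami n f =
     (let M = int CARD('m) - 2 * int n in
      sf_add (mulR2 n (super_laplace n f))
        (sf_scale (-1) (super_euler n (sf_add (sf_scale (of_int (M - 2)) f) (super_euler n f)))))"

end

theory Submission
  imports Defs
begin

lemma pd_eq:
  fixes g :: "real^'m::finite \<Rightarrow> complex"
  assumes "(g has_derivative g') (at x)"
  shows "pd i g x = g' (axis i 1)"
proof -
  have l: "((\<lambda>t::real. x + t *\<^sub>R axis i 1) has_derivative (\<lambda>t. t *\<^sub>R axis i 1)) (at 0)"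
    by (auto intro!: derivative_eq_intros)
  have "((\<lambda>t. g (x + t *\<^sub>R axis i 1)) has_derivative (\<lambda>t. g' (t *\<^sub>R axis i 1))) (at 0)"
    using has_derivative_compose[OF l] assms by simp
  moreover have "(\<lambda>t. g' (t *\<^sub>R axis i 1)) = (\<lambda>t. t *\<^sub>R g' (axis i 1))"
    using has_derivative_bounded_linear[OF assms] by (simp add: linear.scaleR[OF bounded_linear.linear])
  ultimately have "((\<lambda>t. g (x + t *\<^sub>R axis i 1)) has_vector_derivative g' (axis i 1)) (at 0)"
    by (simp add: has_vector_derivative_def)
  then show ?thesis unfolding pd_def by (rule vector_derivative_at)
qed

lemma pd_local:
  fixes g g' :: "real^'m::finite \<Rightarrow> complex"
  assumes "open S" "x \<in> S" "\<And>y. y \<in> S \<Longrightarrow> g y = g' y"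
  shows "pd i g x = pd i g' x"
proof -
  let ?l = "\<lambda>t::real. x + t *\<^sub>R axis i 1"
  have c: "\<And>t. continuous (at t) ?l" by (intro continuous_intros)
  have T: "open (?l -` S)" by (rule continuous_open_vimage[OF assms(1) c])
  have 0: "0 \<in> ?l -` S" using assms(2) by simp
  have eqv: "\<And>D. ((\<lambda>t. g (?l t)) has_vector_derivative D) (at 0) \<longleftrightarrow> ((\<lambda>t. g' (?l t)) has_vector_derivative D) (at 0)"
  proof
    fix D assume "((\<lambda>t. g (?l t)) has_vector_derivative D) (at 0)"
    then show "((\<lambda>t. g' (?l t)) has_vector_derivative D) (at 0)"
      by (rule has_vector_derivative_transform_within_open[OF _ T 0]) (simp add: assms(3))
  next
    fix D assume "((\<lambda>t. g' (?l t)) has_vector_derivative D) (at 0)"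
    then show "((\<lambda>t. g (?l t)) has_vector_derivative D) (at 0)"
      by (rule has_vector_derivative_transform_within_open[OF _ T 0]) (simp add: assms(3))
  qed
  show ?thesis unfolding pd_def vector_derivative_def using eqv by simp
qed

lemma pd_diff_eq:
  fixes g :: "real^'m::finite \<Rightarrow> complex"
  assumes "g differentiable (at x)"
  shows "pd i g x = frechet_derivative g (at x) (axis i 1)"
  by (rule pd_eq) (use assms frechet_derivative_works in blast)

lemma pd_mult:
  fixes a b :: "real^'m::finite \<Rightarrow> complex"
  assumes "a differentiable (at x)" "b differentiable (at x)"
  shows "pd i (\<lambda>y. a y * b y) x = pd i a x * b x + a x * pd i b x"
proof -
  obtain a' where a: "(a has_derivative a') (at x)" using assms(1) differentiable_def by blast
  obtain b' where b: "(b has_derivative b') (at x)" using assms(2) differentiable_def by blast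
  have "((\<lambda>y. a y * b y) has_derivative (\<lambda>h. a x * b' h + a' h * b x)) (at x)"
    using has_derivative_mult[OF a b] .
  from pd_eq[OF this] show ?thesis using pd_eq[OF a] pd_eq[OF b] by (simp add: algebra_simps)
qed

lemma pd_add:
  fixes a b :: "real^'m::finite \<Rightarrow> complex"
  assumes "a differentiable (at x)" "b differentiable (at x)"
  shows "pd i (\<lambda>y. a y + b y) x = pd i a x + pd i b x"
proof -
  obtain a' where a: "(a has_derivative a') (at x)" using assms(1) differentiable_def by blast
  obtain b' where b: "(b has_derivative b') (at x)" using assms(2) differentiable_def by blast
  show ?thesis using pd_eq[OF has_derivative_add[OF a b]] pd_eq[OF a] pd_eq[OF b] by simp
qed

lemma pd_sum:
  fixes a :: "'j \<Rightarrow> real^'m::finite \<Rightarrow> complex"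
  assumes "finite S" "\<And>j. j \<in> S \<Longrightarrow> a j differentiable (at x)"
  shows "pd i (\<lambda>y. \<Sum>j\<in>S. a j y) x = (\<Sum>j\<in>S. pd i (a j) x)"
  using assms
proof (induction S rule: finite_induct)
  case empty
  have "pd i (\<lambda>y. 0::complex) x = 0" by (rule pd_eq[where g'="\<lambda>_. 0", simplified]) simp
  then show ?case by simp
next
  case (insert j S)
  have d: "(\<lambda>y. \<Sum>j\<in>S. a j y) differentiable (at x)"
    using insert by (intro differentiable_sum) auto
  have "pd i (\<lambda>y. \<Sum>j\<in>insert j S. a j y) x = pd i (\<lambda>y. a j y + (\<Sum>j\<in>S. a j y)) x"
    using insert by simp
  also have "\<dots> = pd i (a j) x + pd i (\<lambda>y. \<Sum>j\<in>S. a j y) x"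
    using pd_add[OF _ d, of "a j"] insert by simp
  finally show ?case using insert by simp
qed

lemma pd_const: "pd i (\<lambda>y::real^'m::finite. c::complex) x = 0"
  by (rule pd_eq[where g'="\<lambda>_. 0", simplified]) simp

lemma rsq_inner: "rsq y = y \<bullet> y"
  by (simp add: rsq_def inner_vec_def power2_eq_square)

lemma rsq_pos: "y \<noteq> 0 \<Longrightarrow> rsq y > 0"
  by (simp add: rsq_inner)

lemma rsq_has_derivative:
  "(rsq has_derivative (\<lambda>h. 2 * (y \<bullet> h))) (at y)"
proof -
  have "((\<lambda>y. y \<bullet> y) has_derivative (\<lambda>h. y \<bullet> h + h \<bullet> y)) (at y)"
    by (auto intro!: derivative_eq_intros)
  then show ?thesis unfolding rsq_inner[abs_def] by (simp add: inner_commute)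
qed

lemma radial_has_derivative:
  assumes "(G has_real_derivative G1) (at (rsq x))"
  shows "((\<lambda>y. complex_of_real (G (rsq y))) has_derivative
           (\<lambda>h. complex_of_real (G1 * (2 * (x \<bullet> h))))) (at x)"
proof -
  have g: "(G has_derivative (\<lambda>h. G1 * h)) (at (rsq x))"
    using assms by (simp add: has_field_derivative_def)
  have "((\<lambda>y. G (rsq y)) has_derivative (\<lambda>h. G1 * (2 * (x \<bullet> h)))) (at x)"
    using has_derivative_compose[OF rsq_has_derivative g] .
  then show ?thesis by (rule has_derivative_of_real)
qed

lemma radial_differentiable:
  assumes "(G has_real_derivative G1) (at (rsq x))"
  shows "(\<lambda>y. complex_of_real (G (rsq y))) differentiable (at x)"
  using radial_has_derivative[OF assms] differentiable_def by blast

lemma pd_radial: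
  assumes "(G has_real_derivative G1) (at (rsq x))"
  shows "pd i (\<lambda>y. complex_of_real (G (rsq y))) x = complex_of_real (2 * x$i * G1)"
  using pd_eq[OF radial_has_derivative[OF assms]] by (simp add: inner_axis)

lemma coord_has_derivative:
  "((\<lambda>y::real^'m::finite. complex_of_real (c * y$i)) has_derivative (\<lambda>h. complex_of_real (c * h$i))) (at x)"
  by (auto intro!: derivative_eq_intros bounded_linear.has_derivative[OF bounded_linear_vec_nth])

lemma pd_coord: "pd i (\<lambda>y::real^'m::finite. complex_of_real (c * y$i)) x = complex_of_real c"
  using pd_eq[OF coord_has_derivative, of i c i x] by simp

definition prr :: "nat \<Rightarrow> nat set" where "prr j = {2*j - 1, 2*j}"
definition PJ :: "nat set \<Rightarrow> nat set" where "PJ J = \<Union> (prr ` J)"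
definition subs :: "nat \<Rightarrow> nat set \<Rightarrow> nat set set" where
  "subs n B = {J. J \<subseteq> {1..n} \<and> PJ J \<subseteq> B}"
definition Hg :: "nat \<Rightarrow> (nat \<Rightarrow> real \<Rightarrow> real) \<Rightarrow> 'm::finite sfun \<Rightarrow> 'm sfun" where
  "Hg n G u = (\<lambda>B x. if finite B then
     (\<Sum>J\<in>subs n B. complex_of_real (G (card J) (rsq x)) * u (B - PJ J) x) else 0)"

lemma finite_subs[simp]: "finite (subs n B)"
  by (rule finite_subset[of _ "Pow {1..n}"]) (auto simp: subs_def)

lemma prr_idx: "j \<ge> 1 \<Longrightarrow> a \<in> prr j \<Longrightarrow> (a + 1) div 2 = j"
  by (auto simp: prr_def)

lemma prr_ne: "j \<ge> 1 \<Longrightarrow> 2*j \<in> prr j" "j \<ge> 1 \<Longrightarrow> 2*j - 1 \<in> prr j"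
  by (auto simp: prr_def)

lemma finite_prr[simp]: "finite (prr j)" by (simp add: prr_def)

lemma card_prr: "j \<ge> 1 \<Longrightarrow> card (prr j) = 2" by (simp add: prr_def)

lemma prr_disj: "j \<ge> 1 \<Longrightarrow> k \<ge> 1 \<Longrightarrow> j \<noteq> k \<Longrightarrow> prr j \<inter> prr k = {}"
  using prr_idx by blast

definition pos :: "nat set \<Rightarrow> bool" where "pos J \<longleftrightarrow> (\<forall>j\<in>J. j \<ge> 1)"

lemma pos_sub[simp]: "J \<subseteq> {1..n} \<Longrightarrow> pos J" by (auto simp: pos_def)
lemma pos_mono: "pos J \<Longrightarrow> K \<subseteq> J \<Longrightarrow> pos K" by (auto simp: pos_def)

lemma in_prr_idx: "a \<ge> 1 \<Longrightarrow> a \<in> prr ((a + 1) div 2)"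
  unfolding prr_def by simp presburger

lemma in_PJ: "pos J \<Longrightarrow> a \<in> PJ J \<longleftrightarrow> (a + 1) div 2 \<in> J \<and> a \<ge> 1"
proof
  assume p: "pos J" and "a \<in> PJ J"
  then obtain j where j: "j \<in> J" "a \<in> prr j" by (auto simp: PJ_def)
  then have "j \<ge> 1" using p by (auto simp: pos_def)
  then show "(a + 1) div 2 \<in> J \<and> a \<ge> 1" using j prr_idx[of j a] by (auto simp: prr_def)
next
  assume "(a + 1) div 2 \<in> J \<and> a \<ge> 1"
  then show "a \<in> PJ J" using in_prr_idx[of a] by (auto simp: PJ_def)
qed

lemma prr_sub_PJ: "pos J \<Longrightarrow> j \<ge> 1 \<Longrightarrow> prr j \<subseteq> PJ J \<longleftrightarrow> j \<in> J"
proof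
  assume "pos J" "j \<ge> 1" "prr j \<subseteq> PJ J"
  then have "2*j \<in> PJ J" using prr_ne by auto
  then show "j \<in> J" using \<open>pos J\<close> by (simp add: in_PJ)
qed (auto simp: PJ_def)

lemma prr_disj_PJ: "pos J \<Longrightarrow> j \<ge> 1 \<Longrightarrow> prr j \<inter> PJ J = {} \<longleftrightarrow> j \<notin> J"
proof
  assume "pos J" "j \<ge> 1" "prr j \<inter> PJ J = {}"
  then show "j \<notin> J" using prr_ne[of j] by (auto simp: PJ_def)
next
  assume a: "pos J" "j \<ge> 1" "j \<notin> J"
  show "prr j \<inter> PJ J = {}"
  proof (rule ccontr)
    assume "prr j \<inter> PJ J \<noteq> {}"
    then obtain a where "a \<in> prr j" "a \<in> PJ J" by auto
    then show False using a prr_idx[of j a] in_PJ[of J a] by auto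
  qed
qed

lemma PJ_union: "PJ (J \<union> K) = PJ J \<union> PJ K" by (auto simp: PJ_def)
lemma PJ_insert: "PJ (insert j K) = prr j \<union> PJ K" by (auto simp: PJ_def)
lemma PJ_empty[simp]: "PJ {} = {}" by (simp add: PJ_def)

lemma PJ_subset_iff: "pos J \<Longrightarrow> pos K \<Longrightarrow> PJ J \<subseteq> PJ K \<longleftrightarrow> J \<subseteq> K"
proof
  assume pj: "pos J" "pos K" and s: "PJ J \<subseteq> PJ K"
  show "J \<subseteq> K"
  proof
    fix j assume "j \<in> J"
    then have "j \<ge> 1" using pj by (auto simp: pos_def)
    then have "2*j \<in> PJ J" using \<open>j\<in>J\<close> by (auto simp: PJ_def prr_def)
    then have "2*j \<in> PJ K" using s by auto
    then show "j \<in> K" using pj(2) by (simp add: in_PJ)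
  qed
qed (auto simp: PJ_def)

lemma PJ_inj: "pos J \<Longrightarrow> pos K \<Longrightarrow> PJ J = PJ K \<Longrightarrow> J = K"
  by (metis PJ_subset_iff order_refl subset_antisym)

lemma PJ_disj: "pos J \<Longrightarrow> pos K \<Longrightarrow> PJ J \<inter> PJ K = {} \<longleftrightarrow> J \<inter> K = {}"
proof
  assume a: "pos J" "pos K" "PJ J \<inter> PJ K = {}"
  show "J \<inter> K = {}"
  proof (rule ccontr)
    assume "J \<inter> K \<noteq> {}"
    then obtain j where "j \<in> J" "j \<in> K" by auto
    then have "2*j \<in> PJ J" "2*j \<in> PJ K" using a by (auto simp: PJ_def pos_def prr_def)
    then show False using a by auto
  qed
next
  assume a: "pos J" "pos K" "J \<inter> K = {}"
  then show "PJ J \<inter> PJ K = {}" using in_PJ[OF a(1)] in_PJ[OF a(2)] by blast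
qed

lemma PJ_diff: "pos J \<Longrightarrow> pos K \<Longrightarrow> PJ (J - K) = PJ J - PJ K"
  using in_PJ[of J] in_PJ[of K] in_PJ[of "J - K"] pos_mono[of J "J - K"] by auto

lemma finite_PJ[simp]: "finite J \<Longrightarrow> finite (PJ J)" by (simp add: PJ_def)

lemma card_PJ: "finite J \<Longrightarrow> pos J \<Longrightarrow> card (PJ J) = 2 * card J"
proof (induction J rule: finite_induct)
  case (insert j J)
  have j: "j \<ge> 1" "pos J" using insert by (auto simp: pos_def)
  have d: "prr j \<inter> PJ J = {}" using prr_disj_PJ[OF j(2) j(1)] insert by simp
  show ?case using insert j d by (simp add: PJ_insert card_Un_disjoint card_prr)
qed simp

lemma gsign_PJ:
  assumes "finite C" "J \<subseteq> {1..n}" "PJ J \<subseteq> C"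
  shows "gsign (PJ J) (C - PJ J) = 1"
proof -
  let ?D = "C - PJ J"
  let ?S = "{(a, b). a \<in> PJ J \<and> b \<in> ?D \<and> b < a}"
  have fJ: "finite J" using assms(2) finite_subset by blast
  have p: "pos J" using assms(2) by simp
  have eq: "?S = (\<lambda>(b,a). (a,b)) ` (SIGMA b:?D. {a\<in>PJ J. b < a})" by auto
  have inj: "inj (\<lambda>(b::nat,a::nat). (a,b))" by (auto simp: inj_on_def)
  have "card ?S = card (SIGMA b:?D. {a\<in>PJ J. b < a})"
    unfolding eq by (rule card_image[OF inj_on_subset[OF inj]]) simp
  also have "\<dots> = (\<Sum>b\<in>?D. card {a\<in>PJ J. b < a})" using assms(1) fJ by (intro card_SigmaI) auto
  also have "\<dots> = (\<Sum>b\<in>?D. 2 * card {j\<in>J. b < 2*j - 1})"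
  proof (rule sum.cong[OF refl])
    fix b assume b: "b \<in> ?D"
    have nb: "\<forall>j\<in>J. b \<noteq> 2*j - 1 \<and> b \<noteq> 2*j" using b by (auto simp: PJ_def prr_def)
    have "{a\<in>PJ J. b < a} = PJ {j\<in>J. b < 2*j - 1}"
    proof
      show "{a\<in>PJ J. b < a} \<subseteq> PJ {j\<in>J. b < 2*j - 1}"
      proof
        fix a assume "a \<in> {a\<in>PJ J. b < a}"
        then obtain j where j: "j \<in> J" "a \<in> prr j" "b < a" by (auto simp: PJ_def)
        then have "b < 2*j - 1" using nb by (auto simp: prr_def)
        then show "a \<in> PJ {j\<in>J. b < 2*j - 1}" using j by (auto simp: PJ_def)
      qed
    next
      show "PJ {j\<in>J. b < 2*j - 1} \<subseteq> {a\<in>PJ J. b < a}"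
        by (auto simp: PJ_def prr_def)
    qed
    then show "card {a\<in>PJ J. b < a} = 2 * card {j\<in>J. b < 2*j - 1}"
      using card_PJ[of "{j\<in>J. b < 2*j - 1}"] fJ pos_mono[OF p] by auto
  qed
  also have "\<dots> = 2 * (\<Sum>b\<in>?D. card {j\<in>J. b < 2*j - 1})" by (simp add: sum_distrib_left)
  finally have "even (card ?S)" by simp
  then show ?thesis by (simp add: gsign_def)
qed

lemma subs_mono: "A \<subseteq> C \<Longrightarrow> subs n A \<subseteq> subs n C"
  by (auto simp: subs_def)

lemma Hg_one_eq:
  assumes "finite C" "A \<subseteq> C"
  shows "Hg n c sf_one A x = (\<Sum>J\<in>subs n C. if PJ J = A then complex_of_real (c (card J) (rsq x)) else 0)"
proof -
  have fA: "finite A" using assms finite_subset by blast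
  have "Hg n c sf_one A x = (\<Sum>J\<in>subs n A. if PJ J = A then complex_of_real (c (card J) (rsq x)) else 0)"
    unfolding Hg_def sf_one_def using fA
    by (auto intro!: sum.cong simp: subs_def)
  also have "\<dots> = (\<Sum>J\<in>subs n C. if PJ J = A then complex_of_real (c (card J) (rsq x)) else 0)"
    using assms(2) by (intro sum.mono_neutral_left) (auto simp: subs_def)
  finally show ?thesis .
qed

lemma sf_mult_Hg_one: "sf_mult (Hg n c sf_one) u = Hg n c u"
proof (intro ext)
  fix C x
  show "sf_mult (Hg n c sf_one) u C x = Hg n c u C x"
  proof (cases "finite C")
    case False
    then have "infinite {A. A \<subseteq> C}" using finite_Pow_iff[of C] by (simp add: Pow_def)
    then show ?thesis using False by (simp add: sf_mult_def Hg_def)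
  next
    case True
    have fP: "finite {A. A \<subseteq> C}" using True finite_Pow_iff[of C] by (simp add: Pow_def)
    have "sf_mult (Hg n c sf_one) u C x =
      (\<Sum>A\<in>{A. A \<subseteq> C}. \<Sum>J\<in>subs n C. if PJ J = A then gsign A (C - A) * complex_of_real (c (card J) (rsq x)) * u (C - A) x else 0)"
      unfolding sf_mult_def
      by (intro sum.cong refl) (auto simp: Hg_one_eq[OF True] sum_distrib_left sum_distrib_right if_distrib intro!: sum.cong)
    also have "\<dots> = (\<Sum>J\<in>subs n C. \<Sum>A\<in>{A. A \<subseteq> C}. if PJ J = A then gsign A (C - A) * complex_of_real (c (card J) (rsq x)) * u (C - A) x else 0)"
      by (rule sum.swap)
    also have "\<dots> = (\<Sum>J\<in>subs n C. gsign (PJ J) (C - PJ J) * complex_of_real (c (card J) (rsq x)) * u (C - PJ J) x)"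
      using fP by (intro sum.cong refl) (auto simp: subs_def)
    also have "\<dots> = Hg n c u C x"
      unfolding Hg_def using True by (auto intro!: sum.cong simp: gsign_PJ subs_def)
    finally show ?thesis .
  qed
qed

lemma Hg_comp:
  "Hg n A (Hg n K u) B x = (if finite B then (\<Sum>L\<in>subs n B.
      (\<Sum>J\<in>Pow L. complex_of_real (A (card J) (rsq x)) * complex_of_real (K (card (L - J)) (rsq x)))
        * u (B - PJ L) x) else 0)"
proof (cases "finite B")
  case True
  let ?a = "\<lambda>J. complex_of_real (A (card J) (rsq x))"
  let ?k = "\<lambda>J. complex_of_real (K (card J) (rsq x))"
  have "Hg n A (Hg n K u) B x = (\<Sum>J\<in>subs n B. \<Sum>K'\<in>subs n (B - PJ J). ?a J * (?k K' * u (B - PJ J - PJ K') x))"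
    unfolding Hg_def using True by (simp add: sum_distrib_left)
  also have "\<dots> = (\<Sum>(J,K')\<in>Sigma (subs n B) (\<lambda>J. subs n (B - PJ J)). ?a J * (?k K' * u (B - PJ J - PJ K') x))"
    by (rule sum.Sigma) auto
  also have "\<dots> = (\<Sum>(L,J)\<in>Sigma (subs n B) Pow. ?a J * ?k (L - J) * u (B - PJ L) x)"
  proof (rule sum.reindex_bij_witness[where i="\<lambda>(L,J). (J, L - J)" and j="\<lambda>(J,K'). (J \<union> K', J)"])
    fix a assume a: "a \<in> Sigma (subs n B) (\<lambda>J. subs n (B - PJ J))"
    obtain J K' where [simp]: "a = (J, K')" by (cases a)
    have J: "J \<subseteq> {1..n}" "PJ J \<subseteq> B" and K: "K' \<subseteq> {1..n}" "PJ K' \<subseteq> B - PJ J" using a by (auto simp: subs_def)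
    have "PJ J \<inter> PJ K' = {}" using K by blast
    then have dj: "J \<inter> K' = {}" using PJ_disj[of J K'] J K by simp
    have e1: "(J \<union> K') - J = K'" using dj by blast
    have e2: "B - PJ (J \<union> K') = B - PJ J - PJ K'" by (auto simp: PJ_union)
    show "(case case a of (J, K') \<Rightarrow> (J \<union> K', J) of (L, J) \<Rightarrow> (J, L - J)) = a" using dj by auto
    show "(case a of (J, K') \<Rightarrow> (J \<union> K', J)) \<in> Sigma (subs n B) Pow"
      using J K by (auto simp: subs_def PJ_union)
    show "(case case a of (J, K') \<Rightarrow> (J \<union> K', J) of (L, J) \<Rightarrow> ?a J * ?k (L - J) * u (B - PJ L) x) =
          (case a of (J, K') \<Rightarrow> ?a J * (?k K' * u (B - PJ J - PJ K') x))"
      using e1 e2 by (simp add: mult.assoc)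
  next
    fix b assume b: "b \<in> Sigma (subs n B) Pow"
    obtain L J where [simp]: "b = (L, J)" by (cases b)
    have L: "L \<subseteq> {1..n}" "PJ L \<subseteq> B" "J \<subseteq> L" using b by (auto simp: subs_def)
    have pL: "pos L" "pos J" using L pos_mono[of L J] by auto
    show "(case case b of (L, J) \<Rightarrow> (J, L - J) of (J, K') \<Rightarrow> (J \<union> K', J)) = b" using L by auto
    have "PJ J \<subseteq> PJ L" using PJ_subset_iff[OF pL(2) pL(1)] L by simp
    moreover have "PJ (L - J) = PJ L - PJ J" using PJ_diff[OF pL] .
    ultimately show "(case b of (L, J) \<Rightarrow> (J, L - J)) \<in> Sigma (subs n B) (\<lambda>J. subs n (B - PJ J))"
      using L by (auto simp: subs_def)
  qed
  also have "\<dots> = (\<Sum>L\<in>subs n B. \<Sum>J\<in>Pow L. ?a J * ?k (L - J) * u (B - PJ L) x)"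
    by (rule sum.Sigma[symmetric]) (auto simp: subs_def intro: finite_subset)
  finally show ?thesis using True by (simp add: sum_distrib_right)
qed (simp add: Hg_def)

definition d1 :: "nat \<Rightarrow> real \<Rightarrow> real" where "d1 l t = (if l = 1 then 1 else 0)"

lemma Hg_cong: "(\<And>l t. G l t = G' l t) \<Longrightarrow> Hg n G u = Hg n G' u"
proof -
  assume "\<And>l t. G l t = G' l t"
  then have "G = G'" by (intro ext)
  then show ?thesis by simp
qed

lemma sum_Pow_swap:
  assumes "finite L"
  shows "(\<Sum>J\<in>Pow L. f J (L - J)) = (\<Sum>J\<in>Pow L. f (L - J) J)"
  by (rule sum.reindex_bij_witness[where i="\<lambda>J. L - J" and j="\<lambda>J. L - J"]) (auto simp: Diff_Diff_Int Int_absorb1)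

lemma Hg_comm: "Hg n A (Hg n K u) = Hg n K (Hg n A u)"
proof (intro ext)
  fix B x
  show "Hg n A (Hg n K u) B x = Hg n K (Hg n A u) B x"
    unfolding Hg_comp
    by (auto intro!: sum.cong simp: subs_def mult.commute finite_subset sum_Pow_swap[where f="\<lambda>J J'. complex_of_real (A (card J) (rsq x)) * complex_of_real (K (card J') (rsq x))"])
qed

lemma sum_d1:
  assumes "finite L"
  shows "(\<Sum>J\<in>Pow L. complex_of_real (d1 (card J) t) * complex_of_real (K (card (L - J)) t))
    = complex_of_real (real (card L) * K (card L - 1) t)"
proof -
  have "(\<Sum>J\<in>Pow L. complex_of_real (d1 (card J) t) * complex_of_real (K (card (L - J)) t))
      = (\<Sum>J\<in>Pow L. if card J = 1 then complex_of_real (K (card L - 1) t) else 0)"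
    using assms by (intro sum.cong refl) (auto simp: d1_def card_Diff_subset finite_subset)
  also have "\<dots> = (\<Sum>J\<in>{J\<in>Pow L. card J = 1}. complex_of_real (K (card L - 1) t))"
    using assms by (simp add: sum.If_cases Int_def)
  also have "\<dots> = of_nat (card {J. J \<subseteq> L \<and> card J = 1}) * complex_of_real (K (card L - 1) t)"
    by (simp add: Pow_def)
  also have "card {J. J \<subseteq> L \<and> card J = 1} = card L" using n_subsets[OF assms, of 1] by simp
  finally show ?thesis by simp
qed

lemma Hg_d1_left: "Hg n d1 (Hg n K u) = Hg n (\<lambda>l t. real l * K (l - 1) t) u"
proof (intro ext)
  fix B x
  show "Hg n d1 (Hg n K u) B x = Hg n (\<lambda>l t. real l * K (l - 1) t) u B x"
    unfolding Hg_comp by (auto simp: Hg_def subs_def sum_d1 finite_subset intro!: sum.cong)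
qed

lemma Hg_d1_right: "Hg n K (Hg n d1 u) = Hg n (\<lambda>l t. real l * K (l - 1) t) u"
  using Hg_comm Hg_d1_left by metis

lemma Hg_one_PJ:
  assumes "J0 \<subseteq> {1..n}"
  shows "Hg n c sf_one (PJ J0) x = complex_of_real (c (card J0) (rsq x))"
proof -
  have f: "finite J0" using assms finite_subset by blast
  have e0: "Hg n c sf_one (PJ J0) x = (\<Sum>J\<in>subs n (PJ J0). complex_of_real (c (card J) (rsq x)) * (if PJ J0 - PJ J = {} then 1 else 0))"
    by (simp add: Hg_def sf_one_def f)
  have "Hg n c sf_one (PJ J0) x = (\<Sum>J\<in>subs n (PJ J0). if J = J0 then complex_of_real (c (card J) (rsq x)) else 0)"
    unfolding e0
  proof (intro sum.cong refl)
    fix J assume "J \<in> subs n (PJ J0)"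
    then have J: "J \<subseteq> {1..n}" "PJ J \<subseteq> PJ J0" by (auto simp: subs_def)
    have p: "pos J" "pos J0" using J assms by auto
    have "J \<subseteq> J0" using J PJ_subset_iff[OF p] by simp
    moreover have "PJ J0 - PJ J = {} \<longleftrightarrow> J0 \<subseteq> J" using PJ_subset_iff[OF p(2) p(1)] by auto
    ultimately show "complex_of_real (c (card J) (rsq x)) * (if PJ J0 - PJ J = {} then 1 else 0) =
         (if J = J0 then complex_of_real (c (card J) (rsq x)) else 0)" by auto
  qed
  also have "\<dots> = complex_of_real (c (card J0) (rsq x))" using assms by (simp add: subs_def)
  finally show ?thesis .
qed

lemma Hg_one_nonPJ:
  assumes "\<forall>J. J \<subseteq> {1..n} \<longrightarrow> A \<noteq> PJ J"
  shows "Hg n c sf_one A x = 0"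
  unfolding Hg_def sf_one_def using assms by (auto intro!: sum.neutral simp: subs_def)

lemma Hg_one_char:
  assumes "\<And>J x. J \<subseteq> {1..n} \<Longrightarrow> v (PJ J) x = complex_of_real (c (card J) (rsq x))"
    and "\<And>A x. \<forall>J. J \<subseteq> {1..n} \<longrightarrow> A \<noteq> PJ J \<Longrightarrow> v A x = 0"
  shows "v = Hg n c sf_one"
proof (intro ext)
  fix A x
  show "v A x = Hg n c sf_one A x"
  proof (cases "\<exists>J. J \<subseteq> {1..n} \<and> A = PJ J")
    case True
    then obtain J where "J \<subseteq> {1..n}" "A = PJ J" by blast
    then show ?thesis using assms(1)[of J x] Hg_one_PJ[of J n c x] by simp
  next
    case False
    then show ?thesis using assms(2) Hg_one_nonPJ by auto
  qed
qed

lemma PJ_single: "PJ {j} = prr j" by (simp add: PJ_def)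

lemma xg_pair: "j \<ge> 1 \<Longrightarrow> xg (2*j - 1) (xg (2*j) sf_one) A x = (if A = prr j then 1 else 0)"
proof (cases "A = prr j")
  case True
  assume j: "j \<ge> 1"
  have a: "A - {2*j - 1} = {2*j}" "{b \<in> A. b < 2*j - 1} = {}" "{b\<in>{2*j}. b < 2*j} = {}"
    using True j by (auto simp: prr_def)
  have b: "{a. (a = 2*j - Suc 0 \<or> a = 2*j) \<and> a < 2*j - Suc 0} = {}" "{a. a = 2*j \<and> a < 2*j} = {}" by auto
  show ?thesis using True j a by (simp add: xg_def sf_one_def prr_def b)
next
  case False
  assume j: "j \<ge> 1"
  have "\<not> (2*j - 1 \<in> A \<and> 2*j \<in> A - {2*j - 1} \<and> A - {2*j - 1} - {2*j} = {})"
  proof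
    assume h: "2*j - 1 \<in> A \<and> 2*j \<in> A - {2*j - 1} \<and> A - {2*j - 1} - {2*j} = {}"
    then have "A = prr j" by (auto simp: prr_def)
    then show False using False by simp
  qed
  then show ?thesis using False by (auto simp: xg_def sf_one_def)
qed

lemma xgsq_Hg: "xgsq n = (Hg n d1 sf_one :: 'm::finite sfun)"
proof (rule Hg_one_char)
  fix J and x :: "real^'m" assume J: "J \<subseteq> {1..n}"
  have p: "pos J" using J by simp
  have e: "\<And>j. j \<in> {1..n} \<Longrightarrow> (PJ J = prr j) = (J = {j})"
    using PJ_inj[OF p, of "{j}" for j] by (auto simp: PJ_single pos_def)
  have "xgsq n (PJ J) x = (\<Sum>j\<in>{1..n}. if J = {j} then 1 else 0)"
    unfolding xgsq_def sf_sum_def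
  proof (intro sum.cong refl)
    fix j assume j: "j \<in> {1..n}"
    have "xg (2*j - 1) (xg (2*j) sf_one) (PJ J) x = (if PJ J = prr j then 1 else 0)"
      by (rule xg_pair) (use j in simp)
    then show "xg (2*j - 1) (xg (2*j) sf_one) (PJ J) x = (if J = {j} then 1 else 0)"
      using e[OF j] by simp
  qed
  also have "\<dots> = complex_of_real (d1 (card J) (rsq x))"
  proof (cases "card J = 1")
    case True
    then obtain j0 where j0: "J = {j0}" using card_1_singletonE by blast
    then have "j0 \<in> {1..n}" using J by auto
    then show ?thesis using j0 by (simp add: d1_def)
  next
    case False
    then have "\<And>j. J \<noteq> {j}" by auto
    then show ?thesis using False by (simp add: d1_def)
  qed
  finally show "xgsq n (PJ J) x = complex_of_real (d1 (card J) (rsq x))" .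
next
  fix A and x :: "real^'m" assume A: "\<forall>J. J \<subseteq> {1..n} \<longrightarrow> A \<noteq> PJ J"
  have "\<And>j. j \<in> {1..n} \<Longrightarrow> A \<noteq> prr j" using A PJ_single by (metis empty_subsetI insert_subset)
  then show "xgsq n A x = 0" unfolding xgsq_def sf_sum_def
  proof (intro sum.neutral ballI)
    fix j assume j: "j \<in> {1..n}" "\<And>j. j \<in> {1..n} \<Longrightarrow> A \<noteq> prr j"
    have "xg (2*j - 1) (xg (2*j) sf_one) A x = (if A = prr j then 1 else 0)"
      by (rule xg_pair) (use j in simp)
    then show "xg (2*j - 1) (xg (2*j) sf_one) A x = 0" using j by simp
  qed
qed

lemma sf_mult_xgsq: "sf_mult (xgsq n) u = Hg n d1 u"
  by (simp add: xgsq_Hg sf_mult_Hg_one)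

lemma sf_one_Hg: "sf_one = (Hg n (\<lambda>l t. if l = 0 then 1 else 0) sf_one :: 'm::finite sfun)"
proof (rule Hg_one_char)
  fix J and x :: "real^'m" assume J: "J \<subseteq> {1..n}"
  have f: "finite J" using J finite_subset by blast
  have "PJ J = {} \<longleftrightarrow> J = {}" using PJ_inj[of J "{}"] J by auto
  then show "sf_one (PJ J) x = complex_of_real (if card J = 0 then 1 else 0)"
    using f by (simp add: sf_one_def)
next
  fix A and x :: "real^'m" assume A: "\<forall>J. J \<subseteq> {1..n} \<longrightarrow> A \<noteq> PJ J"
  then have "A \<noteq> {}" using PJ_empty by (metis empty_subsetI)
  then show "sf_one A x = 0" by (simp add: sf_one_def)
qed

lemma sf_pow_xgsq: "sf_pow (xgsq n) k = (Hg n (\<lambda>l t. if l = k then fact k else 0) sf_one :: 'm::finite sfun)"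
proof (induction k)
  case 0
  have "sf_pow (xgsq n :: 'm sfun) 0 = sf_one" by simp
  also have "\<dots> = Hg n (\<lambda>l t. if l = 0 then 1 else 0) sf_one" by (rule sf_one_Hg)
  also have "\<dots> = Hg n (\<lambda>l t. if l = 0 then fact 0 else 0) sf_one" by (rule Hg_cong) simp
  finally show ?case .
next
  case (Suc k)
  have "sf_pow (xgsq n :: 'm sfun) (Suc k) = sf_mult (xgsq n) (sf_pow (xgsq n) k)" by simp
  also have "\<dots> = Hg n d1 (sf_pow (xgsq n) k)" by (rule sf_mult_xgsq)
  also have "\<dots> = Hg n d1 (Hg n (\<lambda>l t. if l = k then fact k else 0) sf_one)"
    by (simp only: Suc.IH)
  also have "\<dots> = Hg n (\<lambda>l t. real l * (if l - 1 = k then fact k else 0)) sf_one"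
    by (rule Hg_d1_left)
  also have "\<dots> = Hg n (\<lambda>l t. if l = Suc k then fact (Suc k) else 0) sf_one"
  proof (rule Hg_cong)
    fix l t
    show "real l * (if l - 1 = k then fact k else 0) = (if l = Suc k then fact (Suc k) else (0::real))"
      by (cases l) auto
  qed
  finally show ?case .
qed

definition psi :: "(real \<Rightarrow> real) \<Rightarrow> nat \<Rightarrow> real \<Rightarrow> real" where
  "psi h l t = (-1) ^ l * (deriv ^^ l) h t"

lemma Hg_scal: "Hg n G (sf_scal g) A x = g x * Hg n G sf_one A x"
  unfolding Hg_def sf_scal_def sf_one_def by (auto simp: sum_distrib_left intro!: sum.cong)

lemma hR2_Hg: "hR2 n h = (Hg n (psi h) sf_one :: 'm::finite sfun)"
proof -
  have e: "\<And>A x. hR2 n h A x = (\<Sum>j\<in>{0..n}. ((-1) ^ j / of_nat (fact j)) *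
      (complex_of_real ((deriv ^^ j) h (rsq x)) * Hg n (\<lambda>l t. if l = j then fact j else 0) sf_one A x))"
    unfolding hR2_def sf_sum_def sf_scale_def sf_pow_xgsq sf_mult_Hg_one Hg_scal by simp
  show ?thesis
  proof (rule Hg_one_char)
    fix J and x :: "real^'m" assume J: "J \<subseteq> {1..n}"
    have c: "card J \<le> n" using card_mono[OF _ J] by simp
    have "hR2 n h (PJ J) x = (\<Sum>j\<in>{0..n}. if j = card J then ((-1) ^ j / of_nat (fact j)) *
      (complex_of_real ((deriv ^^ j) h (rsq x)) * of_real (fact j)) else 0)"
      unfolding e by (intro sum.cong refl) (auto simp: Hg_one_PJ[OF J])
    also have "\<dots> = ((-1) ^ card J / of_nat (fact (card J))) *
      (complex_of_real ((deriv ^^ card J) h (rsq x)) * of_real (fact (card J)))"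
      using c by simp
    also have "\<dots> = complex_of_real (psi h (card J) (rsq x))"
      by (simp add: psi_def)
    finally show "hR2 n h (PJ J) x = complex_of_real (psi h (card J) (rsq x))" .
  next
    fix A and x :: "real^'m" assume A: "\<forall>J. J \<subseteq> {1..n} \<longrightarrow> A \<noteq> PJ J"
    show "hR2 n h A x = 0" unfolding e by (simp add: Hg_one_nonPJ[OF A])
  qed
qed

lemma sf_mult_hR2: "sf_mult (hR2 n h) u = Hg n (psi h) u"
  by (simp add: hR2_Hg sf_mult_Hg_one)

definition Do :: "nat \<Rightarrow> 'm::finite sfun \<Rightarrow> 'm sfun" where
  "Do n u = (\<lambda>B x. \<Sum>j\<in>{j\<in>{1..n}. prr j \<inter> B = {}}. u (B \<union> prr j) x)"
definition No :: "nat \<Rightarrow> 'm::finite sfun \<Rightarrow> 'm sfun" where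
  "No n u = (\<lambda>B x. of_nat (card (B \<inter> gens n)) * u B x)"
definition Nc :: "nat \<Rightarrow> 'm::finite sfun \<Rightarrow> 'm sfun" where
  "Nc n u = (\<lambda>B x. (of_nat n - of_nat (card (B \<inter> gens n))) * u B x)"
definition Eb :: "'m::finite sfun \<Rightarrow> 'm sfun" where
  "Eb u = (\<lambda>B x. \<Sum>i\<in>UNIV. complex_of_real (x$i) * pd i (u B) x)"
definition Lb :: "'m::finite sfun \<Rightarrow> 'm sfun" where
  "Lb u = (\<lambda>B x. \<Sum>i\<in>UNIV. pd i (pd i (u B)) x)"

lemma neg1_sq: "((-1::complex) ^ c) * ((-1) ^ c) = 1"
  by (simp add: power_mult_distrib[symmetric])

lemma dg_pair:
  assumes "j \<ge> 1"
  shows "dg (2*j - 1) (dg (2*j) f) A x = (if prr j \<inter> A = {} then - f (A \<union> prr j) x else 0)"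
proof (cases "prr j \<inter> A = {}")
  case True
  then have n: "2*j - 1 \<notin> A" "2*j \<notin> A" using prr_ne assms by auto
  let ?S = "{a\<in>A. a < 2*j - 1}"
  have fS: "finite ?S" by (rule finite_subset[of _ "{..<2*j-1}"]) auto
  have e: "{a\<in>insert (2*j-1) A. a < 2*j} = insert (2*j - 1) ?S" using n assms by auto
  have nS: "2*j-1 \<notin> ?S" by simp
  have c: "card {a\<in>insert (2*j-1) A. a < 2*j} = Suc (card ?S)" using e fS nS by simp
  have m: "2*j \<notin> insert (2*j-1) A" using n assms by simp
  have u: "insert (2*j) (insert (2*j-1) A) = A \<union> prr j" by (auto simp: prr_def)
  have "dg (2*j - 1) (dg (2*j) f) A x = (-1) ^ card ?S * ((-1) ^ Suc (card ?S) * f (A \<union> prr j) x)"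
    using n m c u by (simp add: dg_def)
  also have "\<dots> = - f (A \<union> prr j) x"
    using neg1_sq[of "card ?S"] by (simp add: algebra_simps)
  finally show ?thesis using True by simp
next
  case False
  then have "2*j-1 \<in> A \<or> 2*j \<in> insert (2*j-1) A" by (auto simp: prr_def)
  then show ?thesis using False by (auto simp: dg_def)
qed

lemma xg_dg: "xg j (dg j f) B x = (if j \<in> B then f B x else 0)"
proof (cases "j \<in> B")
  case True
  have e: "{a \<in> B. a \<noteq> j \<and> a < j} = {a\<in>B. a < j}" by auto
  have i: "insert j B = B" using True by auto
  show ?thesis using True
    by (simp add: xg_def dg_def e i neg1_sq mult.assoc[symmetric])
qed (simp add: xg_def)

lemma super_laplace_eq: "super_laplace n f = sf_add (Lb f) (sf_scale 4 (Do n f))"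
proof (intro ext)
  fix A x
  have "(\<Sum>j\<in>{1..n}. dg (2*j - 1) (dg (2*j) f) A x) = (\<Sum>j\<in>{1..n}. if prr j \<inter> A = {} then - f (A \<union> prr j) x else 0)"
  proof (intro sum.cong refl)
    fix j assume "j \<in> {1..n}"
    then show "dg (2*j - 1) (dg (2*j) f) A x = (if prr j \<inter> A = {} then - f (A \<union> prr j) x else 0)"
      by (intro dg_pair) simp
  qed
  also have "\<dots> = - Do n f A x"
    by (simp add: Do_def sum.If_cases sum_negf Int_def)
  finally show "super_laplace n f A x = sf_add (Lb f) (sf_scale 4 (Do n f)) A x"
    by (simp add: super_laplace_def sf_add_def sf_scale_def sf_sum_def sf_sumb_def db_def Lb_def)
qed

lemma super_euler_eq: "super_euler n f = sf_add (Eb f) (No n f)"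
proof (intro ext)
  fix A x
  have "(\<Sum>j\<in>{1..2*n}. xg j (dg j f) A x) = (\<Sum>j\<in>{1..2*n}. if j \<in> A then f A x else 0)"
    by (intro sum.cong refl) (simp add: xg_dg)
  also have "\<dots> = of_nat (card (A \<inter> gens n)) * f A x"
    by (simp add: sum.If_cases gens_def Int_def conj_commute)
  finally show "super_euler n f A x = sf_add (Eb f) (No n f) A x"
    by (simp add: super_euler_def sf_add_def sf_sum_def sf_sumb_def db_def xb_def Eb_def No_def)
qed

lemma mulR2_eq: "mulR2 n u = (\<lambda>A x. complex_of_real (rsq x) * u A x - Hg n d1 u A x)"
  by (intro ext) (simp add: mulR2_def sf_add_def sf_scale_def sf_mult_xgsq)

lemma gens_PJ: "gens n = PJ {1..n}"
proof -
  have "\<And>a. a \<in> PJ {1..n} \<longleftrightarrow> a \<in> {1..2*n}"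
  proof -
    fix a
    have "((a::nat)+1) div 2 \<le> n \<longleftrightarrow> a \<le> 2*n" "1 \<le> a \<Longrightarrow> 1 \<le> (a+1) div 2" by linarith+
    moreover have "a \<in> PJ {1..n} \<longleftrightarrow> (a + 1) div 2 \<in> {1..n} \<and> a \<ge> 1"
      by (rule in_PJ) (simp add: pos_def)
    ultimately show "a \<in> PJ {1..n} \<longleftrightarrow> a \<in> {1..2*n}" by auto
  qed
  then show ?thesis unfolding gens_def by (intro set_eqI) simp
qed

lemma PJ_sub_gens: "J \<subseteq> {1..n} \<Longrightarrow> PJ J \<subseteq> gens n"
  unfolding gens_PJ by (auto simp: PJ_def)

lemma finite_gens[simp]: "finite (gens n)" by (simp add: gens_def)

lemma card_gens_diff:
  assumes "J \<in> subs n B"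
  shows "card (B \<inter> gens n) = card ((B - PJ J) \<inter> gens n) + 2 * card J"
proof -
  have J: "J \<subseteq> {1..n}" "PJ J \<subseteq> B" using assms by (auto simp: subs_def)
  have fJ: "finite J" using J finite_subset by blast
  have s: "PJ J \<subseteq> B \<inter> gens n" using J PJ_sub_gens by auto
  have e: "(B - PJ J) \<inter> gens n = (B \<inter> gens n) - PJ J" by auto
  have "card (B \<inter> gens n) = card ((B \<inter> gens n) - PJ J) + card (PJ J)"
    using card_Diff_subset[OF _ s] card_mono[OF _ s] by (simp add: fJ)
  then show ?thesis using e card_PJ[OF fJ] J by simp
qed

lemma Hg_No: "No n (Hg n G u) = sf_add (Hg n G (No n u)) (Hg n (\<lambda>l t. 2 * real l * G l t) u)"
proof (intro ext)
  fix B x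
  show "No n (Hg n G u) B x = sf_add (Hg n G (No n u)) (Hg n (\<lambda>l t. 2 * real l * G l t) u) B x"
  proof (cases "finite B")
    case True
    have "No n (Hg n G u) B x = (\<Sum>J\<in>subs n B. of_nat (card (B \<inter> gens n)) * (complex_of_real (G (card J) (rsq x)) * u (B - PJ J) x))"
      unfolding No_def Hg_def using True by (simp add: sum_distrib_left)
    also have "\<dots> = (\<Sum>J\<in>subs n B. complex_of_real (G (card J) (rsq x)) * (of_nat (card ((B - PJ J) \<inter> gens n)) * u (B - PJ J) x)
        + complex_of_real (2 * real (card J) * G (card J) (rsq x)) * u (B - PJ J) x)"
    proof (intro sum.cong refl)
      fix J assume "J \<in> subs n B"
      from card_gens_diff[OF this] show "of_nat (card (B \<inter> gens n)) * (complex_of_real (G (card J) (rsq x)) * u (B - PJ J) x) =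
         complex_of_real (G (card J) (rsq x)) * (of_nat (card ((B - PJ J) \<inter> gens n)) * u (B - PJ J) x)
        + complex_of_real (2 * real (card J) * G (card J) (rsq x)) * u (B - PJ J) x"
        by (simp add: algebra_simps)
    qed
    also have "\<dots> = sf_add (Hg n G (No n u)) (Hg n (\<lambda>l t. 2 * real l * G l t) u) B x"
      unfolding sf_add_def Hg_def No_def using True by (simp add: sum.distrib)
    finally show ?thesis .
  qed (simp add: No_def Hg_def sf_add_def)
qed

definition free :: "nat \<Rightarrow> nat set \<Rightarrow> nat set" where "free n B = {j\<in>{1..n}. prr j \<inter> B = {}}"
definition full :: "nat \<Rightarrow> nat set \<Rightarrow> nat set" where "full n B = {j\<in>{1..n}. prr j \<subseteq> B}"

lemma card_int_prr:
  assumes "j \<ge> 1"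
  shows "int (card (B \<inter> prr j)) = of_bool (2*j - 1 \<in> B) + of_bool (2*j \<in> B)"
proof -
  have ne: "2*j - 1 \<noteq> 2*j" using assms by simp
  show ?thesis
  proof (cases "2*j - 1 \<in> B"; cases "2*j \<in> B")
    assume "2*j - 1 \<in> B" "2*j \<in> B"
    then have "B \<inter> prr j = {2*j - 1, 2*j}" by (auto simp: prr_def)
    then show ?thesis using ne \<open>2*j - 1 \<in> B\<close> \<open>2*j \<in> B\<close> by simp
  next
    assume "2*j - 1 \<in> B" "2*j \<notin> B"
    then have "B \<inter> prr j = {2*j - 1}" by (auto simp: prr_def)
    then show ?thesis using \<open>2*j - 1 \<in> B\<close> \<open>2*j \<notin> B\<close> by simp
  next
    assume "2*j - 1 \<notin> B" "2*j \<in> B"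
    then have "B \<inter> prr j = {2*j}" by (auto simp: prr_def)
    then show ?thesis using \<open>2*j - 1 \<notin> B\<close> \<open>2*j \<in> B\<close> by simp
  next
    assume "2*j - 1 \<notin> B" "2*j \<notin> B"
    then have "B \<inter> prr j = {}" by (auto simp: prr_def)
    then show ?thesis using \<open>2*j - 1 \<notin> B\<close> \<open>2*j \<notin> B\<close> by simp
  qed
qed

lemma count_pairs:
  "int (card (free n B)) - int (card (full n B)) = int n - int (card (B \<inter> gens n))"
proof -
  have e: "B \<inter> gens n = (\<Union>j\<in>{1..n}. B \<inter> prr j)" unfolding gens_PJ PJ_def by auto
  have "card (B \<inter> gens n) = (\<Sum>j\<in>{1..n}. card (B \<inter> prr j))"
    unfolding e by (rule card_UN_disjoint) (auto, metis One_nat_def prr_idx)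
  then have c1: "int (card (B \<inter> gens n)) = (\<Sum>j\<in>{1..n}. of_bool (2*j - 1 \<in> B) + of_bool (2*j \<in> B))"
    by (simp add: card_int_prr)
  have c2: "int (card (free n B)) = (\<Sum>j\<in>{1..n}. of_bool (prr j \<inter> B = {}))"
    by (simp add: free_def Int_def)
  have c3: "int (card (full n B)) = (\<Sum>j\<in>{1..n}. of_bool (prr j \<subseteq> B))"
    by (simp add: full_def Int_def)
  have c4: "int n = (\<Sum>j\<in>{1..n}. 1)" by simp
  have t: "\<And>j. j \<in> {1..n} \<Longrightarrow> of_bool (prr j \<inter> B = {}) - of_bool (prr j \<subseteq> B)
      = 1 - (of_bool (2*j - 1 \<in> B) + of_bool (2*j \<in> B) :: int)"
    by (auto simp: prr_def)
  show ?thesis unfolding c1 c2 c3 c4 sum_subtractf[symmetric] using t by (intro sum.cong refl) simp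
qed

lemma subs_insert_free:
  assumes j: "j \<in> free n B"
  shows "subs n (B \<union> prr j) = subs n B \<union> insert j ` subs n B"
    and "subs n B \<inter> insert j ` subs n B = {}"
    and "inj_on (insert j) (subs n B)"
    and "\<And>J. J \<in> subs n B \<Longrightarrow> j \<notin> J"
proof -
  have j1: "j \<ge> 1" "j \<le> n" "prr j \<inter> B = {}" using j by (auto simp: free_def)
  have pj: "prr j \<noteq> {}" using prr_ne[OF j1(1)] by auto
  show nj: "\<And>J. J \<in> subs n B \<Longrightarrow> j \<notin> J"
  proof
    fix J assume J: "J \<in> subs n B" "j \<in> J"
    then have "prr j \<subseteq> PJ J" by (auto simp: PJ_def)
    then show False using J j1 pj by (auto simp: subs_def)
  qed
  show "subs n B \<inter> insert j ` subs n B = {}" using nj by auto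
  show "inj_on (insert j) (subs n B)" unfolding inj_on_def using nj by (metis Diff_insert_absorb)
  show "subs n (B \<union> prr j) = subs n B \<union> insert j ` subs n B"
  proof
    show "subs n (B \<union> prr j) \<subseteq> subs n B \<union> insert j ` subs n B"
    proof
      fix J assume J: "J \<in> subs n (B \<union> prr j)"
      then have Js: "J \<subseteq> {1..n}" "PJ J \<subseteq> B \<union> prr j" by (auto simp: subs_def)
      have pJ: "pos J" using Js by simp
      show "J \<in> subs n B \<union> insert j ` subs n B"
      proof (cases "j \<in> J")
        case False
        then have "prr j \<inter> PJ J = {}" using prr_disj_PJ[OF pJ j1(1)] by simp
        then have "J \<in> subs n B" using Js by (auto simp: subs_def)
        then show ?thesis by simp
      next
        case True
        have pJ': "pos {j}" using j1 by (simp add: pos_def)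
        have "PJ (J - {j}) = PJ J - prr j" using PJ_diff[OF pJ pJ'] by (simp add: PJ_single)
        then have "J - {j} \<in> subs n B" using Js by (auto simp: subs_def)
        moreover have "J = insert j (J - {j})" using True by auto
        ultimately show ?thesis by blast
      qed
    qed
  next
    show "subs n B \<union> insert j ` subs n B \<subseteq> subs n (B \<union> prr j)"
      using j1 by (auto simp: subs_def PJ_insert)
  qed
qed

lemma Hg_at_insert_free:
  assumes j: "j \<in> free n B" and fB: "finite B"
  shows "Hg n G u (B \<union> prr j) x =
    (\<Sum>J\<in>subs n B. complex_of_real (G (card J) (rsq x)) * u ((B - PJ J) \<union> prr j) x)
    + (\<Sum>K\<in>subs n B. complex_of_real (G (card K + 1) (rsq x)) * u (B - PJ K) x)"
proof -
  note s = subs_insert_free[OF j]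
  have j1: "prr j \<inter> B = {}" using j by (auto simp: free_def)
  have "Hg n G u (B \<union> prr j) x = (\<Sum>J\<in>subs n B \<union> insert j ` subs n B.
       complex_of_real (G (card J) (rsq x)) * u (B \<union> prr j - PJ J) x)"
    using fB by (simp add: Hg_def s(1))
  also have "\<dots> = (\<Sum>J\<in>subs n B. complex_of_real (G (card J) (rsq x)) * u (B \<union> prr j - PJ J) x)
     + (\<Sum>J\<in>insert j ` subs n B. complex_of_real (G (card J) (rsq x)) * u (B \<union> prr j - PJ J) x)"
    by (rule sum.union_disjoint) (auto simp: s(2))
  also have "(\<Sum>J\<in>insert j ` subs n B. complex_of_real (G (card J) (rsq x)) * u (B \<union> prr j - PJ J) x)
     = (\<Sum>K\<in>subs n B. complex_of_real (G (card (insert j K)) (rsq x)) * u (B \<union> prr j - PJ (insert j K)) x)"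
    by (rule sum.reindex[OF s(3), unfolded comp_def])
  also have "\<dots> = (\<Sum>K\<in>subs n B. complex_of_real (G (card K + 1) (rsq x)) * u (B - PJ K) x)"
  proof (intro sum.cong refl)
    fix K assume K: "K \<in> subs n B"
    have fK: "finite K" using K by (auto simp: subs_def intro: finite_subset)
    have "card (insert j K) = card K + 1" using fK s(4)[OF K] by simp
    moreover have "B \<union> prr j - PJ (insert j K) = B - PJ K" using j1 by (auto simp: PJ_insert)
    ultimately show "complex_of_real (G (card (insert j K)) (rsq x)) * u (B \<union> prr j - PJ (insert j K)) x =
         complex_of_real (G (card K + 1) (rsq x)) * u (B - PJ K) x" by simp
  qed
  also have "(\<Sum>J\<in>subs n B. complex_of_real (G (card J) (rsq x)) * u (B \<union> prr j - PJ J) x)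
      = (\<Sum>J\<in>subs n B. complex_of_real (G (card J) (rsq x)) * u ((B - PJ J) \<union> prr j) x)"
  proof (intro sum.cong refl)
    fix J assume "J \<in> subs n B"
    then have "PJ J \<subseteq> B" by (auto simp: subs_def)
    then have "B \<union> prr j - PJ J = (B - PJ J) \<union> prr j" using j1 by auto
    then show "complex_of_real (G (card J) (rsq x)) * u (B \<union> prr j - PJ J) x =
         complex_of_real (G (card J) (rsq x)) * u ((B - PJ J) \<union> prr j) x" by simp
  qed
  finally show ?thesis .
qed

lemma J_sub_full: "J \<in> subs n B \<Longrightarrow> J \<subseteq> full n B"
  by (auto simp: subs_def full_def PJ_def)

lemma finite_full[simp]: "finite (full n B)" by (simp add: full_def)
lemma finite_free[simp]: "finite (free n B)" by (simp add: free_def)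

lemma free_diff:
  assumes J: "J \<in> subs n B"
  shows "free n (B - PJ J) = free n B \<union> J" "free n B \<inter> J = {}"
proof -
  have Js: "J \<subseteq> {1..n}" "PJ J \<subseteq> B" using J by (auto simp: subs_def)
  have pJ: "pos J" using Js by simp
  show "free n B \<inter> J = {}"
  proof (rule ccontr)
    assume "free n B \<inter> J \<noteq> {}"
    then obtain j where j: "j \<in> free n B" "j \<in> J" by auto
    then have "prr j \<subseteq> PJ J" "j \<ge> 1" using Js by (auto simp: PJ_def)
    then show False using j Js prr_ne[of j] by (auto simp: free_def)
  qed
  show "free n (B - PJ J) = free n B \<union> J"
  proof
    show "free n (B - PJ J) \<subseteq> free n B \<union> J"
    proof
      fix j assume j: "j \<in> free n (B - PJ J)"
      then have j1: "j \<ge> 1" "j \<le> n" "prr j \<inter> (B - PJ J) = {}" by (auto simp: free_def)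
      show "j \<in> free n B \<union> J"
      proof (cases "j \<in> J")
        case False
        then have "prr j \<inter> PJ J = {}" using prr_disj_PJ[OF pJ j1(1)] by simp
        then show ?thesis using j1 by (auto simp: free_def)
      qed simp
    qed
  next
    show "free n B \<union> J \<subseteq> free n (B - PJ J)"
      using Js by (auto simp: free_def PJ_def)
  qed
qed

lemma sum_remove_one:
  fixes g :: "nat \<Rightarrow> complex" and u :: "'m::finite sfun"
  assumes fB: "finite B"
  shows "(\<Sum>J\<in>subs n B. g (card J) * (\<Sum>j\<in>J. u ((B - PJ J) \<union> prr j) x))
    = (\<Sum>K\<in>subs n B. g (card K + 1) * of_nat (card (full n B) - card K) * u (B - PJ K) x)"
proof -
  have fs: "\<And>J. J \<in> subs n B \<Longrightarrow> finite J" by (auto simp: subs_def intro: finite_subset)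
  have "(\<Sum>J\<in>subs n B. g (card J) * (\<Sum>j\<in>J. u ((B - PJ J) \<union> prr j) x))
     = (\<Sum>J\<in>subs n B. \<Sum>j\<in>J. g (card J) * u ((B - PJ J) \<union> prr j) x)"
    by (simp add: sum_distrib_left)
  also have "\<dots> = (\<Sum>(J,j)\<in>Sigma (subs n B) (\<lambda>J. J). g (card J) * u ((B - PJ J) \<union> prr j) x)"
    by (rule sum.Sigma) (auto simp: fs)
  also have "\<dots> = (\<Sum>(K,j)\<in>Sigma (subs n B) (\<lambda>K. full n B - K). g (card K + 1) * u (B - PJ K) x)"
  proof (rule sum.reindex_bij_witness[where i="\<lambda>(K,j). (insert j K, j)" and j="\<lambda>(J,j). (J - {j}, j)"])
    fix a assume a: "a \<in> Sigma (subs n B) (\<lambda>J. J)"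
    obtain J j where [simp]: "a = (J, j)" by (cases a)
    have Jj: "J \<in> subs n B" "j \<in> J" using a by auto
    have Js: "J \<subseteq> {1..n}" "PJ J \<subseteq> B" using Jj by (auto simp: subs_def)
    show "(case case a of (J, j) \<Rightarrow> (J - {j}, j) of (K, j) \<Rightarrow> (insert j K, j)) = a" using Jj by auto
    show "(case a of (J, j) \<Rightarrow> (J - {j}, j)) \<in> Sigma (subs n B) (\<lambda>K. full n B - K)"
      using Jj J_sub_full[OF Jj(1)] Js by (auto simp: subs_def PJ_def)
    have pj: "pos J" "pos {j}" using Js Jj by (auto simp: pos_def)
    have e1: "card (J - {j}) + 1 = card J" using fs[OF Jj(1)] Jj(2) card_gt_0_iff[of J] by (auto simp: card_Suc_Diff1)
    have "prr j \<subseteq> PJ J" using Jj by (auto simp: PJ_def)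
    then have e2: "B - PJ (J - {j}) = (B - PJ J) \<union> prr j"
      using PJ_diff[OF pj] Js by (auto simp: PJ_single)
    show "(case case a of (J, j) \<Rightarrow> (J - {j}, j) of (K, j) \<Rightarrow> g (card K + 1) * u (B - PJ K) x) =
          (case a of (J, j) \<Rightarrow> g (card J) * u ((B - PJ J) \<union> prr j) x)"
      using e1 e2 by simp
  next
    fix b assume b: "b \<in> Sigma (subs n B) (\<lambda>K. full n B - K)"
    obtain K j where [simp]: "b = (K, j)" by (cases b)
    have Kj: "K \<in> subs n B" "j \<in> full n B" "j \<notin> K" using b by auto
    show "(case case b of (K, j) \<Rightarrow> (insert j K, j) of (J, j) \<Rightarrow> (J - {j}, j)) = b" using Kj by auto
    show "(case b of (K, j) \<Rightarrow> (insert j K, j)) \<in> Sigma (subs n B) (\<lambda>J. J)"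
      using Kj by (auto simp: subs_def full_def PJ_insert)
  qed
  also have "\<dots> = (\<Sum>K\<in>subs n B. \<Sum>j\<in>full n B - K. g (card K + 1) * u (B - PJ K) x)"
    by (rule sum.Sigma[symmetric]) auto
  also have "\<dots> = (\<Sum>K\<in>subs n B. g (card K + 1) * of_nat (card (full n B) - card K) * u (B - PJ K) x)"
  proof (intro sum.cong refl)
    fix K assume K: "K \<in> subs n B"
    have "card (full n B - K) = card (full n B) - card K"
      using J_sub_full[OF K] fs[OF K] by (simp add: card_Diff_subset)
    then show "(\<Sum>j\<in>full n B - K. g (card K + 1) * u (B - PJ K) x) =
          g (card K + 1) * of_nat (card (full n B) - card K) * u (B - PJ K) x" by (simp add: algebra_simps)
  qed
  finally show ?thesis .
qed

lemma count_pairs_c: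
  "(of_nat (card (free n B)) :: complex) - of_nat (card (full n B)) = of_nat n - of_nat (card (B \<inter> gens n))"
proof -
  have "(of_int (int (card (free n B)) - int (card (full n B))) :: complex) = of_int (int n - int (card (B \<inter> gens n)))"
    using count_pairs by simp
  then show ?thesis by simp
qed

lemma Hg_Do: "Do n (Hg n G u) B x = Hg n G (Do n u) B x + Hg n (\<lambda>l t. G (l+1) t) (Nc n u) B x
    - Hg n (\<lambda>l t. real l * G (l+1) t) u B x"
proof (cases "finite B")
  case False
  then show ?thesis by (simp add: Do_def Hg_def)
next
  case True
  let ?g = "\<lambda>J. complex_of_real (G (card J) (rsq x))"
  let ?g1 = "\<lambda>K. complex_of_real (G (card K + 1) (rsq x))"
  let ?S1 = "\<Sum>j\<in>free n B. \<Sum>J\<in>subs n B. ?g J * u ((B - PJ J) \<union> prr j) x"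
  let ?S3 = "\<Sum>K\<in>subs n B. ?g1 K * u (B - PJ K) x"
  have df: "{j\<in>{1..n}. prr j \<inter> B = {}} = free n B" by (simp add: free_def)
  have "Do n (Hg n G u) B x = (\<Sum>j\<in>free n B. Hg n G u (B \<union> prr j) x)"
    by (simp only: Do_def df)
  also have "\<dots> = (\<Sum>j\<in>free n B. (\<Sum>J\<in>subs n B. ?g J * u ((B - PJ J) \<union> prr j) x) + ?S3)"
    by (intro sum.cong refl) (simp add: Hg_at_insert_free[OF _ True])
  also have "\<dots> = ?S1 + of_nat (card (free n B)) * ?S3"
    by (simp add: sum.distrib)
  finally have L: "Do n (Hg n G u) B x = ?S1 + of_nat (card (free n B)) * ?S3" .
  have "Hg n G (Do n u) B x = (\<Sum>J\<in>subs n B. ?g J * (\<Sum>j\<in>free n (B - PJ J). u ((B - PJ J) \<union> prr j) x))"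
    using True by (simp add: Hg_def Do_def free_def)
  also have "\<dots> = (\<Sum>J\<in>subs n B. ?g J * ((\<Sum>j\<in>free n B. u ((B - PJ J) \<union> prr j) x) + (\<Sum>j\<in>J. u ((B - PJ J) \<union> prr j) x)))"
  proof (intro sum.cong refl arg_cong2[where f="(*)"])
    fix J assume J: "J \<in> subs n B"
    have fJ: "finite J" using J by (auto simp: subs_def intro: finite_subset)
    show "(\<Sum>j\<in>free n (B - PJ J). u ((B - PJ J) \<union> prr j) x) =
          (\<Sum>j\<in>free n B. u ((B - PJ J) \<union> prr j) x) + (\<Sum>j\<in>J. u ((B - PJ J) \<union> prr j) x)"
      unfolding free_diff(1)[OF J] using free_diff(2)[OF J] fJ by (intro sum.union_disjoint) auto
  qed
  also have "\<dots> = ?S1 + (\<Sum>J\<in>subs n B. ?g J * (\<Sum>j\<in>J. u ((B - PJ J) \<union> prr j) x))"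
    by (simp add: distrib_left sum.distrib sum_distrib_left sum.swap[of _ "free n B"])
  also have "(\<Sum>J\<in>subs n B. ?g J * (\<Sum>j\<in>J. u ((B - PJ J) \<union> prr j) x))
      = (\<Sum>K\<in>subs n B. ?g1 K * of_nat (card (full n B) - card K) * u (B - PJ K) x)"
    using sum_remove_one[OF True, where g="\<lambda>l. complex_of_real (G l (rsq x))" and n=n and u=u and x=x] by simp
  finally have H: "Hg n G (Do n u) B x = ?S1 + (\<Sum>K\<in>subs n B. ?g1 K * of_nat (card (full n B) - card K) * u (B - PJ K) x)" .
  have X: "Hg n (\<lambda>l t. G (l+1) t) (Nc n u) B x - Hg n (\<lambda>l t. real l * G (l+1) t) u B x
     = (\<Sum>K\<in>subs n B. ?g1 K * ((of_nat n - of_nat (card ((B - PJ K) \<inter> gens n))) * u (B - PJ K) x)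
          - complex_of_real (real (card K) * G (card K + 1) (rsq x)) * u (B - PJ K) x)"
    using True by (simp add: Hg_def Nc_def sum_subtractf)
  have T: "of_nat (card (free n B)) * ?S3 - (\<Sum>K\<in>subs n B. ?g1 K * of_nat (card (full n B) - card K) * u (B - PJ K) x)
     = (\<Sum>K\<in>subs n B. ?g1 K * ((of_nat n - of_nat (card ((B - PJ K) \<inter> gens n))) * u (B - PJ K) x)
          - complex_of_real (real (card K) * G (card K + 1) (rsq x)) * u (B - PJ K) x)"
    unfolding sum_distrib_left sum_subtractf[symmetric]
  proof (intro sum.cong refl)
    fix K assume K: "K \<in> subs n B"
    have fK: "finite K" using K by (auto simp: subs_def intro: finite_subset)
    have le: "card K \<le> card (full n B)" using card_mono[OF _ J_sub_full[OF K]] by simp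
    have c1: "(of_nat (card (full n B) - card K) :: complex) = of_nat (card (full n B)) - of_nat (card K)"
      using le by (simp add: of_nat_diff)
    have c2: "(of_nat (card ((B - PJ K) \<inter> gens n)) :: complex) = of_nat (card (B \<inter> gens n)) - 2 * of_nat (card K)"
      using card_gens_diff[OF K] by simp
    have cp: "(of_nat (card (free n B)) :: complex) = of_nat n - of_nat (card (B \<inter> gens n)) + of_nat (card (full n B))"
      using count_pairs_c[of n B] by (simp add: algebra_simps)
    show "of_nat (card (free n B)) * (?g1 K * u (B - PJ K) x) - ?g1 K * of_nat (card (full n B) - card K) * u (B - PJ K) x =
         ?g1 K * ((of_nat n - of_nat (card ((B - PJ K) \<inter> gens n))) * u (B - PJ K) x)
          - complex_of_real (real (card K) * G (card K + 1) (rsq x)) * u (B - PJ K) x"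
      unfolding c1 c2 cp by (simp add: algebra_simps)
  qed
  have E: "Hg n (\<lambda>l t. G (l+1) t) (Nc n u) B x - Hg n (\<lambda>l t. real l * G (l+1) t) u B x
     = of_nat (card (free n B)) * ?S3 - (\<Sum>K\<in>subs n B. ?g1 K * of_nat (card (full n B) - card K) * u (B - PJ K) x)"
    unfolding X T ..
  have "Hg n G (Do n u) B x + Hg n (\<lambda>l t. G (l+1) t) (Nc n u) B x - Hg n (\<lambda>l t. real l * G (l+1) t) u B x
     = Hg n G (Do n u) B x + (Hg n (\<lambda>l t. G (l+1) t) (Nc n u) B x - Hg n (\<lambda>l t. real l * G (l+1) t) u B x)"
    by (rule add_diff_eq[symmetric])
  also have "\<dots> = Do n (Hg n G u) B x" unfolding E H L by simp
  finally show ?thesis ..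
qed

lemma subs_card: "J \<in> subs n B \<Longrightarrow> card J \<le> n"
  using card_mono[of "{1..n}" J] by (auto simp: subs_def)

lemma Hg_fun_finite: "finite B \<Longrightarrow> Hg n G u B = (\<lambda>y. \<Sum>J\<in>subs n B. complex_of_real (G (card J) (rsq y)) * u (B - PJ J) y)"
  by (intro ext) (simp add: Hg_def)

lemma Hg_fun_infinite: "infinite B \<Longrightarrow> Hg n G u B = (\<lambda>y. 0)"
  by (intro ext) (simp add: Hg_def)

lemma Hg_differentiable:
  assumes G: "\<forall>l\<le>n. (G l has_real_derivative G1 l (rsq x)) (at (rsq x))"
    and u: "\<forall>B'. u B' differentiable (at x)"
  shows "Hg n G u B differentiable (at x)"
proof (cases "finite B")
  case True
  show ?thesis unfolding Hg_fun_finite[OF True]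
  proof (intro differentiable_sum ballI differentiable_mult)
    fix J assume J: "J \<in> subs n B"
    show "(\<lambda>y. complex_of_real (G (card J) (rsq y))) differentiable (at x)"
      using G subs_card[OF J] radial_differentiable by blast
    show "u (B - PJ J) differentiable (at x)" using u by simp
  qed simp
qed (simp add: Hg_fun_infinite)

lemma pd_Hg:
  assumes G: "\<forall>l\<le>n. (G l has_real_derivative G1 l (rsq x)) (at (rsq x))"
    and u: "\<forall>B'. u B' differentiable (at x)"
  shows "pd i (Hg n G u B) x = Hg n G (db i u) B x + complex_of_real (2 * x$i) * Hg n G1 u B x"
proof (cases "finite B")
  case True
  have "pd i (Hg n G u B) x = (\<Sum>J\<in>subs n B. pd i (\<lambda>y. complex_of_real (G (card J) (rsq y)) * u (B - PJ J) y) x)"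
    unfolding Hg_fun_finite[OF True]
  proof (intro pd_sum differentiable_mult)
    fix J assume J: "J \<in> subs n B"
    show "(\<lambda>y. complex_of_real (G (card J) (rsq y))) differentiable (at x)"
      using G subs_card[OF J] radial_differentiable by blast
    show "u (B - PJ J) differentiable (at x)" using u by simp
  qed simp
  also have "\<dots> = (\<Sum>J\<in>subs n B. complex_of_real (2 * x$i * G1 (card J) (rsq x)) * u (B - PJ J) x
       + complex_of_real (G (card J) (rsq x)) * pd i (u (B - PJ J)) x)"
  proof (intro sum.cong refl)
    fix J assume J: "J \<in> subs n B"
    have d: "(G (card J) has_real_derivative G1 (card J) (rsq x)) (at (rsq x))" using G subs_card[OF J] by simp
    show "pd i (\<lambda>y. complex_of_real (G (card J) (rsq y)) * u (B - PJ J) y) x =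
      complex_of_real (2 * x$i * G1 (card J) (rsq x)) * u (B - PJ J) x
       + complex_of_real (G (card J) (rsq x)) * pd i (u (B - PJ J)) x"
      using pd_mult[OF radial_differentiable[OF d], of "u (B - PJ J)" i] u pd_radial[OF d] by simp
  qed
  also have "\<dots> = Hg n G (db i u) B x + complex_of_real (2 * x$i) * Hg n G1 u B x"
    using True by (simp add: Hg_def db_def sum.distrib sum_distrib_left algebra_simps)
  finally show ?thesis .
qed (simp add: Hg_fun_infinite pd_const Hg_def)

lemma Hg_lin_sum:
  "Hg n G (\<lambda>B y. \<Sum>i\<in>I. a i y * w i B y) B x = (\<Sum>i\<in>I. a i x * Hg n G (w i) B x)"
  by (simp add: Hg_def sum_distrib_left sum_distrib_right algebra_simps sum.swap[of _ I])

lemma Hg_rsq: "Hg n (\<lambda>l t. c * t * G l t) u B x = complex_of_real (c * rsq x) * Hg n G u B x"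
  by (simp add: Hg_def sum_distrib_left algebra_simps)

lemma Eb_Hg:
  assumes G: "\<forall>l\<le>n. (G l has_real_derivative G1 l (rsq x)) (at (rsq x))"
    and u: "\<forall>B'. u B' differentiable (at x)"
  shows "Eb (Hg n G u) B x = Hg n G (Eb u) B x + Hg n (\<lambda>l t. 2 * t * G1 l t) u B x"
proof -
  have "Eb (Hg n G u) B x = (\<Sum>i\<in>UNIV. complex_of_real (x$i) * Hg n G (db i u) B x)
      + (\<Sum>i\<in>UNIV. complex_of_real (2 * (x$i)^2) * Hg n G1 u B x)"
    unfolding Eb_def pd_Hg[of n G G1 x u, OF G u] by (simp add: sum.distrib algebra_simps power2_eq_square)
  also have "(\<Sum>i\<in>UNIV. complex_of_real (x$i) * Hg n G (db i u) B x) = Hg n G (Eb u) B x"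
    unfolding Eb_def db_def by (rule Hg_lin_sum[symmetric])
  also have "(\<Sum>i\<in>UNIV. complex_of_real (2 * (x$i)^2) * Hg n G1 u B x) = complex_of_real (2 * rsq x) * Hg n G1 u B x"
    by (simp add: rsq_def sum_distrib_left sum_distrib_right)
  also have "\<dots> = Hg n (\<lambda>l t. 2 * t * G1 l t) u B x" by (rule Hg_rsq[symmetric])
  finally show ?thesis .
qed

lemma coord_differentiable: "(\<lambda>y::real^'m::finite. complex_of_real (c * y$i)) differentiable (at x)"
  using coord_has_derivative differentiable_def by blast

lemma Lb_Hg:
  fixes u :: "'m::finite sfun"
  assumes O: "open \<Omega>" "x \<in> \<Omega>"
    and G: "\<forall>y\<in>\<Omega>. \<forall>l\<le>n. (G l has_real_derivative G1 l (rsq y)) (at (rsq y))"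
    and G1: "\<forall>l\<le>n. (G1 l has_real_derivative G2 l (rsq x)) (at (rsq x))"
    and u: "\<forall>y\<in>\<Omega>. \<forall>B'. u B' differentiable (at y)"
    and du: "\<forall>i B'. pd i (u B') differentiable (at x)"
  shows "Lb (Hg n G u) B x = Hg n G (Lb u) B x + 4 * Hg n G1 (Eb u) B x
     + of_nat (2 * CARD('m)) * Hg n G1 u B x + Hg n (\<lambda>l t. 4 * t * G2 l t) u B x"
proof -
  have Gx: "\<forall>l\<le>n. (G l has_real_derivative G1 l (rsq x)) (at (rsq x))" using G O by blast
  have ux: "\<forall>B'. u B' differentiable (at x)" using u O by blast
  have dux: "\<forall>B'. db i u B' differentiable (at x)" for i using du by (simp add: db_def)
  have step: "pd i (pd i (Hg n G u B)) x = Hg n G (db i (db i u)) B x + complex_of_real (4 * x$i) * Hg n G1 (db i u) B x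
      + 2 * Hg n G1 u B x + complex_of_real (4 * (x$i)^2) * Hg n G2 u B x" for i
  proof -
    have "pd i (pd i (Hg n G u B)) x = pd i (\<lambda>y. Hg n G (db i u) B y + complex_of_real (2 * y$i) * Hg n G1 u B y) x"
    proof (rule pd_local[OF O])
      fix y assume "y \<in> \<Omega>"
      then show "pd i (Hg n G u B) y = Hg n G (db i u) B y + complex_of_real (2 * y$i) * Hg n G1 u B y"
        using G u by (intro pd_Hg) auto
    qed
    also have "\<dots> = pd i (Hg n G (db i u) B) x + pd i (\<lambda>y. complex_of_real (2 * y$i) * Hg n G1 u B y) x"
      using Hg_differentiable[of n G G1 x "db i u" B, OF Gx dux] coord_differentiable
        Hg_differentiable[of n G1 G2 x u B, OF G1 ux]
      by (intro pd_add differentiable_mult) auto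
    also have "pd i (Hg n G (db i u) B) x = Hg n G (db i (db i u)) B x + complex_of_real (2 * x$i) * Hg n G1 (db i u) B x"
      by (rule pd_Hg[of n G G1 x "db i u", OF Gx dux])
    also have "pd i (\<lambda>y. complex_of_real (2 * y$i) * Hg n G1 u B y) x
       = complex_of_real 2 * Hg n G1 u B x + complex_of_real (2 * x$i) * pd i (Hg n G1 u B) x"
      using pd_mult[OF coord_differentiable[of 2 i x] Hg_differentiable[of n G1 G2 x u B, OF G1 ux], of i]
        pd_coord[of i 2 x] by simp
    also have "pd i (Hg n G1 u B) x = Hg n G1 (db i u) B x + complex_of_real (2 * x$i) * Hg n G2 u B x"
      by (rule pd_Hg[of n G1 G2 x u, OF G1 ux])
    finally show ?thesis by (simp add: algebra_simps power2_eq_square)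
  qed
  have "Lb (Hg n G u) B x = (\<Sum>i\<in>UNIV. Hg n G (db i (db i u)) B x) + 4 * (\<Sum>i\<in>UNIV. complex_of_real (x$i) * Hg n G1 (db i u) B x)
      + of_nat (2 * CARD('m)) * Hg n G1 u B x + complex_of_real (4 * rsq x) * Hg n G2 u B x"
    unfolding Lb_def step
    by (simp add: sum.distrib sum_distrib_left sum_distrib_right rsq_def algebra_simps)
  also have "(\<Sum>i\<in>UNIV. Hg n G (db i (db i u)) B x) = Hg n G (Lb u) B x"
    using Hg_lin_sum[where I=UNIV and a="\<lambda>i y. 1" and w="\<lambda>i. db i (db i u)" and n=n and G=G and B=B and x=x] by (simp add: Lb_def db_def)
  also have "(\<Sum>i\<in>UNIV. complex_of_real (x$i) * Hg n G1 (db i u) B x) = Hg n G1 (Eb u) B x"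
    unfolding Eb_def db_def by (rule Hg_lin_sum[symmetric])
  also have "complex_of_real (4 * rsq x) * Hg n G2 u B x = Hg n (\<lambda>l t. 4 * t * G2 l t) u B x"
    by (rule Hg_rsq[symmetric])
  finally show ?thesis .
qed

lemma Hg_add: "Hg n G (sf_add a b) B x = Hg n G a B x + Hg n G b B x"
  by (simp add: Hg_def sf_add_def sum.distrib algebra_simps)

lemma Hg_scale: "Hg n G (sf_scale c a) B x = c * Hg n G a B x"
  by (simp add: Hg_def sf_scale_def sum_distrib_left algebra_simps)

lemma Hg_add': "Hg n G (\<lambda>A y. a A y + b A y) B x = Hg n G a B x + Hg n G b B x"
  by (simp add: Hg_def sum.distrib algebra_simps)

lemma Hg_cmul': "Hg n G (\<lambda>A y. c * a A y) B x = c * Hg n G a B x"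
  by (simp add: Hg_def sum_distrib_left algebra_simps)

lemma Hg_addG: "Hg n G u B x + Hg n K u B x = Hg n (\<lambda>l t. G l t + K l t) u B x"
  by (simp add: Hg_def sum.distrib algebra_simps)

lemma Hg_local: "(\<And>B. w B x = w' B x) \<Longrightarrow> Hg n G w A x = Hg n G w' A x"
  by (simp add: Hg_def)

lemma Eb_local:
  assumes "open \<Omega>" "x \<in> \<Omega>" "\<And>y. y \<in> \<Omega> \<Longrightarrow> w B y = w' B y"
  shows "Eb w B x = Eb w' B x"
  unfolding Eb_def using pd_local[OF assms(1,2), of "w B" "w' B"] assms(3) by simp

lemma Eb_add:
  assumes "w B differentiable (at x)" "w' B differentiable (at x)"
  shows "Eb (sf_add w w') B x = Eb w B x + Eb w' B x"
  unfolding Eb_def sf_add_def using pd_add[OF assms] by (simp add: sum.distrib algebra_simps)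

lemma pd_cmult:
  fixes g :: "real^'m::finite \<Rightarrow> complex"
  assumes "g differentiable (at x)"
  shows "pd i (\<lambda>y. c * g y) x = c * pd i g x"
proof -
  have "pd i (\<lambda>y. c * g y) x = pd i (\<lambda>_. c) x * g x + c * pd i g x" by (rule pd_mult) (use assms in auto)
  moreover have "pd i (\<lambda>_::real^'m. c) x = 0" by (rule pd_const)
  ultimately show ?thesis by simp
qed

lemma Eb_scale:
  assumes "w B differentiable (at x)"
  shows "Eb (sf_scale c w) B x = c * Eb w B x"
  unfolding Eb_def sf_scale_def using pd_cmult[OF assms] by (simp add: sum_distrib_left algebra_simps)

lemma SE_Hg:
  assumes G: "\<forall>l\<le>n. (G l has_real_derivative G1 l (rsq x)) (at (rsq x))"
    and u: "\<forall>B'. u B' differentiable (at x)"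
  shows "super_euler n (Hg n G u) B x = Hg n G (super_euler n u) B x
     + Hg n (\<lambda>l t. 2 * t * G1 l t + 2 * real l * G l t) u B x"
proof -
  have "super_euler n (Hg n G u) B x = Eb (Hg n G u) B x + No n (Hg n G u) B x"
    by (simp add: super_euler_eq sf_add_def)
  also have "\<dots> = Hg n G (Eb u) B x + Hg n (\<lambda>l t. 2 * t * G1 l t) u B x
     + Hg n G (No n u) B x + Hg n (\<lambda>l t. 2 * real l * G l t) u B x"
    using Eb_Hg[of n G G1 x u B, OF G u] Hg_No[of n G u] by (simp add: sf_add_def)
  also have "\<dots> = Hg n G (super_euler n u) B x + Hg n (\<lambda>l t. 2 * t * G1 l t + 2 * real l * G l t) u B x"
    by (simp add: super_euler_eq Hg_add Hg_addG[symmetric] algebra_simps)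
  finally show ?thesis .
qed

lemma SL_Hg:
  fixes u :: "'m::finite sfun"
  assumes O: "open \<Omega>" "x \<in> \<Omega>"
    and G: "\<forall>y\<in>\<Omega>. \<forall>l\<le>n. (G l has_real_derivative G1 l (rsq y)) (at (rsq y))"
    and G1: "\<forall>l\<le>n. (G1 l has_real_derivative G2 l (rsq x)) (at (rsq x))"
    and u: "\<forall>y\<in>\<Omega>. \<forall>B'. u B' differentiable (at y)"
    and du: "\<forall>i B'. pd i (u B') differentiable (at x)"
  shows "super_laplace n (Hg n G u) B x = Hg n G (super_laplace n u) B x + 4 * Hg n G1 (Eb u) B x
     + of_nat (2 * CARD('m)) * Hg n G1 u B x + Hg n (\<lambda>l t. 4 * t * G2 l t) u B x
     + 4 * Hg n (\<lambda>l t. G (l+1) t) (Nc n u) B x - 4 * Hg n (\<lambda>l t. real l * G (l+1) t) u B x"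
proof -
  have a: "super_laplace n (Hg n G u) B x = Lb (Hg n G u) B x + 4 * Do n (Hg n G u) B x"
    by (simp add: super_laplace_eq sf_add_def sf_scale_def)
  have b: "Hg n G (super_laplace n u) B x = Hg n G (Lb u) B x + 4 * Hg n G (Do n u) B x"
    by (simp add: super_laplace_eq sf_add_def sf_scale_def Hg_add' Hg_cmul')
  show ?thesis unfolding a b Lb_Hg[of \<Omega> x n G G1 G2 u B, OF O G G1 u du] Hg_Do[of n G u B x]
    by (simp add: algebra_simps)
qed

lemma ck_real_diff:
  "ck_real k S h \<Longrightarrow> j < k \<Longrightarrow> t \<in> S \<Longrightarrow> (deriv ^^ j) h differentiable (at t)"
proof (induction k arbitrary: h j)
  case 0 then show ?case by simp
next
  case (Suc k)
  show ?case
  proof (cases j)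
    case 0 then show ?thesis using Suc.prems by simp
  next
    case (Suc j')
    have e: "(deriv ^^ j) h = (deriv ^^ j') (deriv h)" using Suc by (simp add: funpow_swap1)
    have "(deriv ^^ j') (deriv h) differentiable (at t)"
      using Suc.IH[of "deriv h" j'] Suc.prems Suc by simp
    then show ?thesis using e by simp
  qed
qed

lemma psi_deriv:
  assumes "ck_real (n + 2) {0<..} h" "l \<le> n + 1" "t > 0"
  shows "(psi h l has_real_derivative - psi h (l+1) t) (at t)"
proof -
  have "(deriv ^^ l) h differentiable (at t)" using ck_real_diff[OF assms(1)] assms(2,3) by simp
  then have "((deriv ^^ l) h has_real_derivative deriv ((deriv ^^ l) h) t) (at t)"
    using DERIV_deriv_iff_real_differentiable by blast
  then have "((\<lambda>t. (-1) ^ l * (deriv ^^ l) h t) has_real_derivative (-1) ^ l * deriv ((deriv ^^ l) h) t) (at t)"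
    by (rule DERIV_cmult)
  then show ?thesis by (simp add: psi_def[abs_def])
qed

lemma SE_local:
  assumes "open \<Omega>" "x \<in> \<Omega>" "\<And>B y. y \<in> \<Omega> \<Longrightarrow> w B y = w' B y"
  shows "super_euler n w A x = super_euler n w' A x"
  using Eb_local[OF assms(1,2), of w A w'] assms by (simp add: super_euler_eq sf_add_def No_def)

lemma SE_add:
  assumes "a A differentiable (at x)" "b A differentiable (at x)"
  shows "super_euler n (sf_add a b) A x = super_euler n a A x + super_euler n b A x"
  using Eb_add[of a A x b, OF assms] by (simp add: super_euler_eq sf_add_def No_def algebra_simps)

lemma Hg_rsq_in: "Hg n G (\<lambda>B y. complex_of_real (rsq y) * g B y) A x = Hg n (\<lambda>l t. t * G l t) g A x"
  by (simp add: Hg_def sum_distrib_left algebra_simps)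

lemma Hg_rsq': "complex_of_real (rsq x) * Hg n G u B x = Hg n (\<lambda>l t. t * G l t) u B x"
  by (simp add: Hg_def sum_distrib_left algebra_simps)

lemma Hg_diff': "Hg n G (\<lambda>A y. a A y - b A y) B x = Hg n G a B x - Hg n G b B x"
  by (simp add: Hg_def sum_subtractf algebra_simps)

lemma LB_eq: "laplace_beltrami n u A x = complex_of_real (rsq x) * super_laplace n u A x
   - Hg n d1 (super_laplace n u) A x
   - super_euler n (sf_add (sf_scale (of_int (int CARD('m) - 2 * int n - 2)) u) (super_euler n u)) A x"
  for u :: "'m::finite sfun"
  by (simp add: laplace_beltrami_def Let_def mulR2_eq sf_add_def sf_scale_def algebra_simps)

lemma coord1_differentiable: "(\<lambda>y::real^'m::finite. complex_of_real (y$i)) differentiable (at x)"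
  using coord_differentiable[of 1 i x] by simp

lemma Eb_differentiable:
  assumes "u B differentiable (at x)" "\<forall>i. pd i (u B) differentiable (at x)"
  shows "Eb u B differentiable (at x)"
  unfolding Eb_def using assms coord1_differentiable by (intro differentiable_sum ballI differentiable_mult) auto

lemma SE_differentiable:
  assumes "u B differentiable (at x)" "\<forall>i. pd i (u B) differentiable (at x)"
  shows "super_euler n u B differentiable (at x)"
proof -
  have "super_euler n u B = (\<lambda>y. Eb u B y + of_nat (card (B \<inter> gens n)) * u B y)"
    by (intro ext) (simp add: super_euler_eq sf_add_def No_def)
  then show ?thesis using Eb_differentiable[of u B x, OF assms] assms(1) by simp
qed

definition cv :: "(nat \<Rightarrow> real \<Rightarrow> real) \<Rightarrow> nat \<Rightarrow> real \<Rightarrow> real" where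
  "cv K = (\<lambda>l t. real l * K (l - 1) t)"
definition q1 :: "(nat \<Rightarrow> real \<Rightarrow> real) \<Rightarrow> nat \<Rightarrow> real \<Rightarrow> real" where
  "q1 p = (\<lambda>l t. - p (l+1) t)"
definition q2 :: "(nat \<Rightarrow> real \<Rightarrow> real) \<Rightarrow> nat \<Rightarrow> real \<Rightarrow> real" where
  "q2 p = (\<lambda>l t. p (l+2) t)"
definition qP :: "(nat \<Rightarrow> real \<Rightarrow> real) \<Rightarrow> nat \<Rightarrow> real \<Rightarrow> real" where
  "qP p = (\<lambda>l t. 2 * t * q1 p l t + 2 * real l * p l t)"
definition qP1 :: "(nat \<Rightarrow> real \<Rightarrow> real) \<Rightarrow> nat \<Rightarrow> real \<Rightarrow> real" where
  "qP1 p = (\<lambda>l t. 2 * q1 p l t + 2 * t * q2 p l t + 2 * real l * q1 p l t)"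

lemma key:
  fixes f s w :: "'m::finite sfun" and p :: "nat \<Rightarrow> real \<Rightarrow> real" and cM :: complex
  assumes "cM = of_int (int CARD('m) - 2 * int n - 2)"
  shows "complex_of_real (rsq x) * (Hg n p s A x + 4 * Hg n (q1 p) (Eb f) A x
      + of_nat (2 * CARD('m)) * Hg n (q1 p) f A x + Hg n (\<lambda>l t. 4 * t * q2 p l t) f A x
      + 4 * Hg n (\<lambda>l t. p (l+1) t) (Nc n f) A x - 4 * Hg n (\<lambda>l t. real l * p (l+1) t) f A x)
    - (Hg n (cv p) s A x + 4 * Hg n (cv (q1 p)) (Eb f) A x
      + of_nat (2 * CARD('m)) * Hg n (cv (q1 p)) f A x + Hg n (cv (\<lambda>l t. 4 * t * q2 p l t)) f A x
      + 4 * Hg n (cv (\<lambda>l t. p (l+1) t)) (Nc n f) A x - 4 * Hg n (cv (\<lambda>l t. real l * p (l+1) t)) f A x)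
    - (Hg n p w A x + Hg n (qP p) (sf_add (sf_scale cM f) (super_euler n f)) A x
      + Hg n (qP p) (super_euler n f) A x
      + Hg n (\<lambda>l t. 2 * t * qP1 p l t + 2 * real l * qP p l t) f A x)
    = complex_of_real (rsq x) * Hg n p s A x - Hg n (cv p) s A x - Hg n p w A x"
proof (cases "finite A")
  case False
  then show ?thesis by (simp add: Hg_def)
next
  case True
  have H: "\<And>K g. Hg n K g A x = (\<Sum>J\<in>subs n A. complex_of_real (K (card J) (rsq x)) * g (A - PJ J) x)"
    using True by (simp add: Hg_def)
  show ?thesis
    unfolding H
    apply (simp only: sum_distrib_left sum.distrib[symmetric] sum_subtractf[symmetric])
    apply (rule sum.cong[OF refl])
    subgoal for J
      apply (cases "card J")
      apply (simp_all add: cv_def q1_def q2_def qP_def qP1_def Nc_def sf_add_def sf_scale_def super_euler_eq No_def assms algebra_simps)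
      done
    done
qed

theorem lemma11:
  fixes n :: nat and \<Omega> :: "(real^'m::finite) set"
    and h :: "real \<Rightarrow> real" and f :: "'m sfun"
  assumes "open \<Omega>" and "0 \<notin> \<Omega>"
    and "ck_real (n + 2) {0<..} h"
    and "wf_sfun n f" and "\<forall>A. ck_on 2 \<Omega> (f A)"
  shows "\<forall>A. \<forall>x\<in>\<Omega>.
    laplace_beltrami n (sf_mult (hR2 n h) f) A x = sf_mult (hR2 n h) (laplace_beltrami n f) A x"
proof (intro allI ballI)
  fix A x assume x: "x \<in> \<Omega>"
  note O = assms(1)
  define p where "p = psi h"
  define cM :: complex where "cM = of_int (int CARD('m) - 2 * int n - 2)"
  define W where "W = (\<lambda>u::'m sfun. sf_add (sf_scale cM u) (super_euler n u))"
  have rpos: "\<And>y. y \<in> \<Omega> \<Longrightarrow> rsq y > 0" using assms(2) rsq_pos by metis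
  have dp: "\<And>l t. l \<le> n + 1 \<Longrightarrow> t > 0 \<Longrightarrow> (p l has_real_derivative - p (l+1) t) (at t)"
    unfolding p_def using psi_deriv[OF assms(3)] by blast
  have DG: "\<forall>y\<in>\<Omega>. \<forall>l\<le>n. (p l has_real_derivative q1 p l (rsq y)) (at (rsq y))"
    using dp rpos by (simp add: q1_def)
  have dp1: "\<And>l s. l \<le> n \<Longrightarrow> s > 0 \<Longrightarrow> (q1 p l has_real_derivative q2 p l s) (at s)"
  proof -
    fix l s assume l: "l \<le> n" and s: "(s::real) > 0"
    have "((\<lambda>t. - p (l+1) t) has_real_derivative - (- p (l+1+1) s)) (at s)"
      using DERIV_minus[OF dp[of "l+1" s]] l s by simp
    then show "(q1 p l has_real_derivative q2 p l s) (at s)"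
      by (simp add: q1_def q2_def numeral_2_eq_2)
  qed
  have DG1: "\<forall>y\<in>\<Omega>. \<forall>l\<le>n. (q1 p l has_real_derivative q2 p l (rsq y)) (at (rsq y))"
    using dp1 rpos by blast
  have DP: "\<forall>y\<in>\<Omega>. \<forall>l\<le>n. (qP p l has_real_derivative qP1 p l (rsq y)) (at (rsq y))"
  proof (intro ballI allI impI)
    fix y l assume y: "y \<in> \<Omega>" and l: "l \<le> n"
    let ?s = "rsq y"
    have s: "?s > 0" using rpos y by simp
    have a: "(q1 p l has_real_derivative q2 p l ?s) (at ?s)" using dp1[OF l s] .
    have b: "(p l has_real_derivative q1 p l ?s) (at ?s)" using DG y l by blast
    have c: "((\<lambda>t::real. 2 * t) has_real_derivative 2) (at ?s)"
      using DERIV_cmult[OF DERIV_ident, of 2] by simp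
    have "((\<lambda>t. 2 * t * q1 p l t + 2 * real l * p l t) has_real_derivative
        (2 * q1 p l ?s + q2 p l ?s * (2 * ?s)) + 2 * real l * q1 p l ?s) (at ?s)"
      by (intro DERIV_add DERIV_mult c a DERIV_cmult b)
    moreover have "qP p l = (\<lambda>t. 2 * t * q1 p l t + 2 * real l * p l t)" by (simp add: qP_def)
    moreover have "qP1 p l ?s = (2 * q1 p l ?s + q2 p l ?s * (2 * ?s)) + 2 * real l * q1 p l ?s"
      by (simp add: qP1_def algebra_simps)
    ultimately show "(qP p l has_real_derivative qP1 p l ?s) (at ?s)" by simp
  qed
  have f2: "\<And>B. ck_on (Suc (Suc 0)) \<Omega> (f B)" using assms(5) by (simp add: numeral_2_eq_2)
  have fd: "\<forall>y\<in>\<Omega>. \<forall>B. f B differentiable (at y)" using f2 by simp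
  have fdd: "\<forall>y\<in>\<Omega>. \<forall>B i. pd i (f B) differentiable (at y)" using f2 by simp
  have SEd: "\<forall>y\<in>\<Omega>. \<forall>B. super_euler n f B differentiable (at y)"
    using fd fdd SE_differentiable by blast
  have Wd: "\<forall>y\<in>\<Omega>. \<forall>B. W f B differentiable (at y)"
  proof (intro ballI allI)
    fix y B assume y: "y \<in> \<Omega>"
    have "W f B = (\<lambda>y. cM * f B y + super_euler n f B y)"
      by (intro ext) (simp add: W_def sf_add_def sf_scale_def)
    then show "W f B differentiable (at y)" using fd SEd y by simp
  qed
  have Dx: "\<forall>l\<le>n. (p l has_real_derivative q1 p l (rsq x)) (at (rsq x))" using DG x by blast
  have DPx: "\<forall>l\<le>n. (qP p l has_real_derivative qP1 p l (rsq x)) (at (rsq x))" using DP x by blast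
  have fdx: "\<forall>B. f B differentiable (at x)" using fd x by blast
  have SEdx: "\<forall>B. super_euler n f B differentiable (at x)" using SEd x by blast
  have Wdx: "\<forall>B. W f B differentiable (at x)" using Wd x by blast
  let ?SLe = "\<lambda>B y. Hg n p (super_laplace n f) B y + 4 * Hg n (q1 p) (Eb f) B y
      + of_nat (2 * CARD('m)) * Hg n (q1 p) f B y + Hg n (\<lambda>l t. 4 * t * q2 p l t) f B y
      + 4 * Hg n (\<lambda>l t. p (l+1) t) (Nc n f) B y - 4 * Hg n (\<lambda>l t. real l * p (l+1) t) f B y"
  have SLx: "\<And>y B. y \<in> \<Omega> \<Longrightarrow> super_laplace n (Hg n p f) B y = ?SLe B y"
  proof -
    fix y B assume y: "y \<in> \<Omega>"
    have g1: "\<forall>l\<le>n. (q1 p l has_real_derivative q2 p l (rsq y)) (at (rsq y))" using DG1 y by blast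
    have du: "\<forall>i B'. pd i (f B') differentiable (at y)" using fdd y by blast
    show "super_laplace n (Hg n p f) B y = ?SLe B y"
      using SL_Hg[of \<Omega> y n p "q1 p" "q2 p" f B, OF O y DG g1 _ du] fd by simp
  qed
  have SEx: "\<And>y B. y \<in> \<Omega> \<Longrightarrow> W (Hg n p f) B y = sf_add (Hg n p (W f)) (Hg n (qP p) f) B y"
  proof -
    fix y B assume y: "y \<in> \<Omega>"
    have Dy: "\<forall>l\<le>n. (p l has_real_derivative q1 p l (rsq y)) (at (rsq y))" using DG y by blast
    have fdy: "\<forall>B. f B differentiable (at y)" using fd y by blast
    show "W (Hg n p f) B y = sf_add (Hg n p (W f)) (Hg n (qP p) f) B y"
      using SE_Hg[of n p "q1 p" y f B, OF Dy fdy]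
      by (simp add: W_def sf_add_def sf_scale_def Hg_add' Hg_cmul' qP_def algebra_simps)
  qed
  have E3: "super_euler n (W (Hg n p f)) A x = Hg n p (super_euler n (W f)) A x + Hg n (qP p) (W f) A x
      + Hg n (qP p) (super_euler n f) A x + Hg n (\<lambda>l t. 2 * t * qP1 p l t + 2 * real l * qP p l t) f A x"
  proof -
    have "super_euler n (W (Hg n p f)) A x = super_euler n (sf_add (Hg n p (W f)) (Hg n (qP p) f)) A x"
      by (rule SE_local[OF O x]) (rule SEx)
    also have "\<dots> = super_euler n (Hg n p (W f)) A x + super_euler n (Hg n (qP p) f) A x"
      by (rule SE_add) (use Hg_differentiable[of n p "q1 p" x "W f" A, OF Dx Wdx] Hg_differentiable[of n "qP p" "qP1 p" x f A, OF DPx fdx] in auto)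
    also have "super_euler n (Hg n p (W f)) A x = Hg n p (super_euler n (W f)) A x + Hg n (qP p) (W f) A x"
      using SE_Hg[of n p "q1 p" x "W f" A, OF Dx Wdx] by (simp add: qP_def)
    also have "super_euler n (Hg n (qP p) f) A x = Hg n (qP p) (super_euler n f) A x
        + Hg n (\<lambda>l t. 2 * t * qP1 p l t + 2 * real l * qP p l t) f A x"
      using SE_Hg[of n "qP p" "qP1 p" x f A, OF DPx fdx] by simp
    finally show ?thesis by (simp add: algebra_simps)
  qed
  have LHS: "laplace_beltrami n (sf_mult (hR2 n h) f) A x = complex_of_real (rsq x) * ?SLe A x
     - Hg n d1 ?SLe A x - super_euler n (W (Hg n p f)) A x"
    unfolding sf_mult_hR2 p_def[symmetric] LB_eq W_def[symmetric] cM_def[symmetric]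
    using SLx[OF x, of A] Hg_local[of "super_laplace n (Hg n p f)" x ?SLe n d1 A] SLx[OF x] by (simp add: W_def)
  have L2: "Hg n d1 ?SLe A x = Hg n (cv p) (super_laplace n f) A x + 4 * Hg n (cv (q1 p)) (Eb f) A x
      + of_nat (2 * CARD('m)) * Hg n (cv (q1 p)) f A x + Hg n (cv (\<lambda>l t. 4 * t * q2 p l t)) f A x
      + 4 * Hg n (cv (\<lambda>l t. p (l+1) t)) (Nc n f) A x - 4 * Hg n (cv (\<lambda>l t. real l * p (l+1) t)) f A x"
    by (simp only: Hg_add' Hg_diff' Hg_cmul' Hg_d1_left cv_def)
  have RHS: "sf_mult (hR2 n h) (laplace_beltrami n f) A x =
      complex_of_real (rsq x) * Hg n p (super_laplace n f) A x - Hg n (cv p) (super_laplace n f) A x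
      - Hg n p (super_euler n (W f)) A x"
  proof -
    have e: "laplace_beltrami n f = (\<lambda>B y. complex_of_real (rsq y) * super_laplace n f B y
      - Hg n d1 (super_laplace n f) B y - super_euler n (W f) B y)"
      by (intro ext) (simp add: LB_eq W_def cM_def)
    show ?thesis unfolding sf_mult_hR2 p_def[symmetric] e
      by (simp only: Hg_diff' Hg_rsq_in Hg_rsq' Hg_d1_right cv_def)
  qed
  show "laplace_beltrami n (sf_mult (hR2 n h) f) A x = sf_mult (hR2 n h) (laplace_beltrami n f) A x"
    unfolding LHS L2 E3 RHS unfolding W_def
    by (rule key) (simp add: cM_def)
qed

end
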